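(* Let $s\ge 2$ and let $Z_1,\dots,Z_s$ be the processes of the autoregressive multi-fidelity model described in the context, with nested designs $D_s\subseteq D_{s-1}\subseteq\dots\subseteq D_1$ and known parameters $\beta=(\beta_1,\dots,\beta_s)$, $\beta_\rho=(\beta_{\rho_1},\dots,\beta_{\rho_{s-1}})$, $\sigma^2=(\sigma_1^2,\dots,\sigma_s^2)$. For $t=1,\dots,s$ and $x\in Q$, the conditional distribution of $Z_t(x)$ given $(\mathcal Z_1,\dots,\mathcal Z_t)=(z^1,\dots,z^t)$ is Gaussian, $$\big[Z_t(x)\,\big|\,\mathcal Z_1=z^1,\dots,\mathcal Z_t=z^t\big]\sim\mathcal N\big(\mu_{Z_t}(x),\,s^2_{Z_t}(x)\big),$$ where $\mu_{Z_t}$ and $s^2_{Z_t}$ are given recursively by $$\mu_{Z_1}(x)=f_1^T(x)\beta_1+r_1^T(x)R_1^{-1}(z^1-F_1\beta_1),\qquad s^2_{Z_1}(x)=\sigma_1^2\big(1-r_1^T(x)R_1^{-1}r_1(x)\big),$$ and, for $t=2,\dots,s$, $$\mu_{Z_t}(x)=\rho_{t-1}(x)\,\mu_{Z_{t-1}}(x)+f_t^T(x)\beta_t+r_t^T(x)R_t^{-1}\big(z^t-\rho_{t-1}(D_t)\odot z_{t-1}(D_t)-F_t\beta_t\big),$$ $$s^2_{Z_t}(x)=\rho_{t-1}^2(x)\,s^2_{Z_{t-1}}(x)+\sigma_t^2\big(1-r_t^T(x)R_t^{-1}r_t(x)\big).$$ In particular the co-kriging predictive mean and variance of the highest-fidelity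 level $Z_s$ given all observations are $\mu_{Z_s}(x)$ and $s^2_{Z_s}(x)$.
   Context: Let $Q$ be an input set. For $t=1,\dots,s$ let $f_t:Q\to\mathbb R^{p_t}$ be regression functions, $\beta_t\in\mathbb R^{p_t}$, $\sigma_t^2>0$, and $r_t:Q\times Q\to\mathbb R$ a correlation kernel (positive definite, $r_t(x,x)=1$). For $t=1,\dots,s-1$ let $g_t:Q\to\mathbb R^{q_t}$, $\beta_{\rho_t}\in\mathbb R^{q_t}$ and $\rho_t(x)=g_t^T(x)\beta_{\rho_t}$. The model: $Z_1$ is a Gaussian process with mean $f_1^T(x)\beta_1$ and covariance $\sigma_1^2 r_1(x,x')$; for $t=2,\dots,s$, $\delta_t$ is a Gaussian process with mean $f_t^T(x)\beta_t$ and covariance $\sigma_t^2 r_t(x,x')$; the processes $Z_1,\delta_2,\dots,\delta_s$ are mutually independent; and $Z_t(x)=\rho_{t-1}(x)Z_{t-1}(x)+\delta_t(x)$ for $t=2,\dots,s$. The designs $D_t\subset Q$ are finite sets with $D_s\subseteq\dots\subseteq D_1$. $\mathcal Z_t$ denotes the vector $(Z_t(x))_{x\in D_t}$ and $z^t$ its observed value. $R_t$ is the matrix $(r_t(x,x'))_{x,x'\in D_t}$ (assumed invertible), $r_t(x)$ is the vector $(r_t(x,x'))_{x'\in D_t}$, $F_t$ is the matrix whose rows are $f_t^T(x)$, $x\in D_t$. $\rho_{t-1}(D_t)$ is the vector $(\rho_{t-1}(x))_{x\in D_t}$, $z_{t-1}(D_t)$ is the vector of observed values of $Z_{t-1}$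 at the points of $D_t$ (a subvector of $z^{t-1}$, since $D_t\subseteq D_{t-1}$), and $\odot$ denotes the entrywise product. *)

theory Defs
  imports "HOL-Probability.Probability"
begin

definition gauss :: "real \<Rightarrow> real \<Rightarrow> real measure" where
  "gauss mu v = (if v = 0 then return borel mu else density lborel (normal_density mu (sqrt v)))"

definition gaussian_process ::
  "'a measure \<Rightarrow> ('a \<Rightarrow> 'q \<Rightarrow> real) \<Rightarrow> ('q \<Rightarrow> real) \<Rightarrow> ('q \<Rightarrow> 'q \<Rightarrow> real) \<Rightarrow> bool" where
  "gaussian_process M X m k \<longleftrightarrow>
     (\<forall>x. (\<lambda>\<omega>. X \<omega> x) \<in> borel_measurable M) \<and>
     (\<forall>D c. finite D \<longrightarrow>
        distr M borel (\<lambda>\<omega>. \<Sum>x\<in>D. c x * X \<omega> x)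
          = gauss (\<Sum>x\<in>D. c x * m x) (\<Sum>x\<in>D. \<Sum>y\<in>D. c x * c y * k x y))"

definition correlation_kernel :: "('q \<Rightarrow> 'q \<Rightarrow> real) \<Rightarrow> bool" where
  "correlation_kernel r \<longleftrightarrow> (\<forall>x y. r x y = r y x) \<and> (\<forall>x. r x x = 1) \<and>
     (\<forall>D c. finite D \<longrightarrow> 0 \<le> (\<Sum>x\<in>D. \<Sum>y\<in>D. c x * c y * r x y))"

definition invertible_on :: "'q set \<Rightarrow> ('q \<Rightarrow> 'q \<Rightarrow> real) \<Rightarrow> bool" where
  "invertible_on D R \<longleftrightarrow>
     (\<forall>a. (\<forall>x\<in>D. (\<Sum>y\<in>D. R x y * a y) = 0) \<longrightarrow> (\<forall>y\<in>D. a y = 0))"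

definition mat_solve :: "'q set \<Rightarrow> ('q \<Rightarrow> 'q \<Rightarrow> real) \<Rightarrow> ('q \<Rightarrow> real) \<Rightarrow> ('q \<Rightarrow> real)" where
  "mat_solve D R v = (THE a. (\<forall>y. y \<notin> D \<longrightarrow> a y = 0) \<and> (\<forall>x\<in>D. (\<Sum>y\<in>D. R x y * a y) = v x))"

definition krig :: "'q set \<Rightarrow> ('q \<Rightarrow> 'q \<Rightarrow> real) \<Rightarrow> ('q \<Rightarrow> real) \<Rightarrow> ('q \<Rightarrow> real) \<Rightarrow> real" where
  "krig D R u v = (\<Sum>y\<in>D. u y * mat_solve D R v y)"

text \<open>Arguments: mean functions m t x = f_t(x)^T beta_t,
  rho t x = g_t(x)^T beta_rho_t, correlation kernels r t, designs D t, level t, point x,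
  observed data z (z (u, y) is the observed value of Z_u at y in D_u).\<close>
fun cok_mean :: "(nat \<Rightarrow> 'q \<Rightarrow> real) \<Rightarrow> (nat \<Rightarrow> 'q \<Rightarrow> real) \<Rightarrow> (nat \<Rightarrow> 'q \<Rightarrow> 'q \<Rightarrow> real)
    \<Rightarrow> (nat \<Rightarrow> 'q set) \<Rightarrow> nat \<Rightarrow> 'q \<Rightarrow> (nat \<times> 'q \<Rightarrow> real) \<Rightarrow> real" where
  "cok_mean m rho r D 0 x z = 0"
| "cok_mean m rho r D (Suc 0) x z =
     m 1 x + krig (D 1) (r 1) (r 1 x) (\<lambda>y. z (1, y) - m 1 y)"
| "cok_mean m rho r D (Suc (Suc t)) x z =
     rho (Suc t) x * cok_mean m rho r D (Suc t) x z + m (Suc (Suc t)) x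
     + krig (D (Suc (Suc t))) (r (Suc (Suc t))) (r (Suc (Suc t)) x)
         (\<lambda>y. z (Suc (Suc t), y) - rho (Suc t) y * z (Suc t, y) - m (Suc (Suc t)) y)"

fun cok_var :: "(nat \<Rightarrow> real) \<Rightarrow> (nat \<Rightarrow> 'q \<Rightarrow> real) \<Rightarrow> (nat \<Rightarrow> 'q \<Rightarrow> 'q \<Rightarrow> real)
    \<Rightarrow> (nat \<Rightarrow> 'q set) \<Rightarrow> nat \<Rightarrow> 'q \<Rightarrow> real" where
  "cok_var sigma2 rho r D 0 x = 0"
| "cok_var sigma2 rho r D (Suc 0) x =
     sigma2 1 * (1 - krig (D 1) (r 1) (r 1 x) (r 1 x))"
| "cok_var sigma2 rho r D (Suc (Suc t)) x =
     (rho (Suc t) x)\<^sup>2 * cok_var sigma2 rho r D (Suc t) x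
     + sigma2 (Suc (Suc t)) * (1 - krig (D (Suc (Suc t))) (r (Suc (Suc t))) (r (Suc (Suc t)) x) (r (Suc (Suc t)) x))"

text \<open>The observation vector (Z_1 on D_1, ..., Z_t on D_t), encoded as a function on nat x Q
  (entries outside the observed index set are set to 0).\<close>
definition obs_data :: "(nat \<Rightarrow> 'a \<Rightarrow> 'q \<Rightarrow> real) \<Rightarrow> (nat \<Rightarrow> 'q set) \<Rightarrow> nat \<Rightarrow> 'a \<Rightarrow> (nat \<times> 'q \<Rightarrow> real)" where
  "obs_data Z D t \<omega> = (\<lambda>(u, y). if u \<in> {1..t} \<and> y \<in> D u then Z u \<omega> y else 0)"

text \<open>K is (a version of) the conditional distribution of X given Y = y (Y valued in N):
  P(X \<in> A, Y \<in> B) = \<integral>_B K y (A) dP_Y(y) for all Borel A and measurable B.\<close>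
definition has_cond_distr ::
  "'a measure \<Rightarrow> ('a \<Rightarrow> real) \<Rightarrow> 'b measure \<Rightarrow> ('a \<Rightarrow> 'b) \<Rightarrow> ('b \<Rightarrow> real measure) \<Rightarrow> bool" where
  "has_cond_distr M X N Y K \<longleftrightarrow>
     (\<forall>A\<in>sets borel. \<forall>B\<in>sets N.
        emeasure M {\<omega>\<in>space M. X \<omega> \<in> A \<and> Y \<omega> \<in> B}
          = (\<integral>\<^sup>+ y. indicator B y * emeasure (K y) A \<partial>(distr M N Y)))"

end

theory Submission
  imports Defs "Jordan_Normal_Form.Determinant"
begin

lemma real_distribution_gauss: "0 \<le> v \<Longrightarrow> real_distribution (gauss mu v)"
  unfolding gauss_def real_distribution_def real_distribution_axioms_def
  by (auto simp: prob_space_return prob_space_normal_density)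

lemma char_return: "char (return borel mu) t = iexp (t * mu)"
  unfolding char_def by (simp add: integral_return)

lemma char_normal:
  assumes "0 < \<sigma>"
  shows "char (density lborel (normal_density mu \<sigma>)) t = iexp (t * mu) * exp (- ((t*\<sigma>)^2) / 2)"
proof -
  interpret S: real_distribution std_normal_distribution by (rule real_dist_normal_dist)
  have d: "distributed std_normal_distribution lborel (\<lambda>x. x) std_normal_density"
    unfolding distributed_def by (simp add: distr_id2)
  have "distributed std_normal_distribution lborel (\<lambda>x. mu + \<sigma> * x) (normal_density (mu + \<sigma> * 0) (\<bar>\<sigma>\<bar> * 1))"
    by (rule S.normal_density_affine[OF d]) (use assms in auto)
  then have e: "density lborel (normal_density mu \<sigma>) = distr std_normal_distribution lborel (\<lambda>x. mu + \<sigma> * x)"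
    using assms unfolding distributed_def by simp
  have "char (density lborel (normal_density mu \<sigma>)) t = (CLINT x|std_normal_distribution. iexp (t * (mu + \<sigma> * x)))"
    unfolding e char_def by (subst integral_distr) auto
  also have "\<dots> = (CLINT x|std_normal_distribution. iexp (t * mu) * iexp ((t*\<sigma>) * x))"
    by (intro Bochner_Integration.integral_cong refl) (simp add: algebra_simps flip: exp_add)
  also have "\<dots> = iexp (t * mu) * char std_normal_distribution (t*\<sigma>)"
    unfolding char_def by simp
  finally show ?thesis by (simp add: char_std_normal_distribution)
qed

lemma char_gauss:
  assumes "0 \<le> v"
  shows "char (gauss mu v) t = exp (\<i> * complex_of_real (t * mu) - complex_of_real (t^2 * v / 2))"
proof (cases "v = 0")
  case True then show ?thesis by (simp add: gauss_def char_return)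
next
  case False
  then have "0 < sqrt v" using assms by simp
  then have "char (gauss mu v) t = exp (\<i> * complex_of_real (t * mu)) * exp (- complex_of_real (t^2 * v / 2))"
    using False assms by (simp add: gauss_def char_normal power_mult_distrib exp_of_real[symmetric])
  then show ?thesis by (simp add: exp_add[symmetric] algebra_simps)
qed

lemma gauss_eqI:
  assumes "real_distribution P" "0 \<le> v"
    and "\<And>t. char P t = exp (\<i> * complex_of_real (t * mu) - complex_of_real (t^2 * v / 2))"
  shows "P = gauss mu v"
  using assms by (intro Levy_uniqueness) (auto simp: real_distribution_gauss char_gauss)

lemma emeasure_density_const:
  assumes "A \<in> sets M"
  shows "emeasure (density M (\<lambda>_. ennreal c)) A = ennreal c * emeasure M A"
  using assms by (simp add: emeasure_density nn_integral_cmult_indicator)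

lemma fin_levy:
  fixes \<mu> \<nu> :: "real measure"
  assumes fm: "finite_measure \<mu>" "finite_measure \<nu>"
    and sets: "sets \<mu> = sets borel" "sets \<nu> = sets borel"
    and ch: "\<And>s. (CLINT x|\<mu>. iexp (s*x)) = (CLINT x|\<nu>. iexp (s*x))"
  shows "\<mu> = \<nu>"
proof -
  interpret A: finite_measure \<mu> by (rule fm)
  interpret B: finite_measure \<nu> by (rule fm)
  have sp: "space \<mu> = UNIV" "space \<nu> = UNIV"
    using sets_eq_imp_space_eq[OF sets(1)] sets_eq_imp_space_eq[OF sets(2)] by auto
  have "complex_of_real (measure \<mu> (space \<mu>)) = complex_of_real (measure \<nu> (space \<nu>))"
    using ch[of 0] by simp
  then have c: "measure \<mu> UNIV = measure \<nu> UNIV" using sp by simp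
  define c where "c = measure \<mu> UNIV"
  have c0: "c \<ge> 0" unfolding c_def by simp
  show ?thesis
  proof (cases "c = 0")
    case True
    show ?thesis
    proof (rule measure_eqI)
      fix A assume A: "A \<in> sets \<mu>"
      have "emeasure \<mu> A \<le> emeasure \<mu> UNIV" using A sp sets.top[of \<mu>] by (intro emeasure_mono) auto
      also have "\<dots> = 0" using True A.emeasure_eq_measure[of UNIV] unfolding c_def by simp
      finally have 1: "emeasure \<mu> A = 0" by simp
      have "emeasure \<nu> A \<le> emeasure \<nu> UNIV" using A sp sets sets.top[of \<nu>] by (intro emeasure_mono) auto
      also have "\<dots> = 0" using True c B.emeasure_eq_measure[of UNIV] unfolding c_def by simp
      finally show "emeasure \<mu> A = emeasure \<nu> A" using 1 by simp
    qed (use sets in simp)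
  next
    case False
    then have cpos: "c > 0" using c0 by simp
    let ?d = "\<lambda>M. density M (\<lambda>_. ennreal (1/c))"
    have rd: "real_distribution (?d M)" if "finite_measure M" "sets M = sets borel" "measure M UNIV = c" for M
    proof -
      interpret finite_measure M by fact
      have spM: "space M = UNIV" using sets_eq_imp_space_eq[OF that(2)] by simp
      have "emeasure (?d M) (space (?d M)) = ennreal (1/c) * emeasure M UNIV"
        using spM sets.top[of M] by (simp add: emeasure_density_const)
      also have "\<dots> = 1" using cpos that(3) emeasure_eq_measure[of UNIV]
        by (simp add: ennreal_mult[symmetric])
      finally have "prob_space (?d M)" by (intro prob_spaceI) simp
      then show ?thesis unfolding real_distribution_def real_distribution_axioms_def
        using that(2) by simp
    qed
    have eq: "?d \<mu> = ?d \<nu>"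
    proof (rule Levy_uniqueness)
      show "real_distribution (?d \<mu>)" using rd[OF fm(1) sets(1)] c_def by simp
      show "real_distribution (?d \<nu>)" using rd[OF fm(2) sets(2)] c c_def by simp
      show "char (?d \<mu>) = char (?d \<nu>)"
      proof
        fix s
        show "char (?d \<mu>) s = char (?d \<nu>) s"
          unfolding char_def using ch[of s] cpos
          by (subst (1 2) integral_density) (auto simp: sets sp measurable_cong_sets[OF sets(1) refl] measurable_cong_sets[OF sets(2) refl])
      qed
    qed
    show ?thesis
    proof (rule measure_eqI)
      show "sets \<mu> = sets \<nu>" using sets by simp
      fix A assume A: "A \<in> sets \<mu>"
      have "emeasure \<mu> A = ennreal c * emeasure (?d \<mu>) A"
        using A cpos by (simp add: emeasure_density_const mult.assoc[symmetric] ennreal_mult[symmetric])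
      also have "\<dots> = ennreal c * emeasure (?d \<nu>) A" using eq by simp
      also have "\<dots> = emeasure \<nu> A"
        using A cpos sets by (simp add: emeasure_density_const mult.assoc[symmetric] ennreal_mult[symmetric])
      finally show "emeasure \<mu> A = emeasure \<nu> A" .
    qed
  qed
qed

abbreviation "PB I \<equiv> PiM I (\<lambda>_. borel :: real measure)"

lemma int_distr_dens:
  fixes f :: "real \<Rightarrow> complex"
  assumes "sets M = sets (PB K)" "i \<in> K" "g \<in> borel_measurable (PB K)" "\<And>x. 0 \<le> g x"
    "f \<in> borel_measurable borel"
  shows "integral\<^sup>L (distr (density M g) borel (\<lambda>x. x i)) f = integral\<^sup>L M (\<lambda>x. g x *\<^sub>R f (x i))"
proof -
  have [measurable]: "g \<in> borel_measurable M" using assms(1,3) measurable_cong_sets by blast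
  have [measurable]: "(\<lambda>x. x i) \<in> measurable M borel"
    using assms(1,2) measurable_cong_sets[OF assms(1) refl] by (auto intro: measurable_component_singleton)
  show ?thesis using assms(4,5)
    by (subst integral_distr) (auto simp: integral_density)
qed

lemma fin_distr_dens:
  fixes C :: real
  assumes "finite_measure M" "sets M = sets (PB K)" "i \<in> K" "g \<in> borel_measurable (PB K)" "\<And>x. 0 \<le> g x" "\<And>x. g x \<le> C"
  shows "finite_measure (distr (density M g) borel (\<lambda>x. x i))"
proof
  interpret finite_measure M by fact
  have [measurable]: "g \<in> borel_measurable M" using assms(2,4) measurable_cong_sets by blast
  have [measurable]: "(\<lambda>x. x i) \<in> measurable M borel"
    using assms(2,3) measurable_cong_sets[OF assms(2) refl] by (auto intro: measurable_component_singleton)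
  have "emeasure (distr (density M g) borel (\<lambda>x. x i)) (space (distr (density M g) borel (\<lambda>x. x i)))
     = (\<integral>\<^sup>+ x. g x \<partial>M)"
    by (subst emeasure_distr) (auto simp: emeasure_density intro!: nn_integral_cong)
  also have "\<dots> \<le> (\<integral>\<^sup>+ x. ennreal C \<partial>M)"
    using assms(6) by (intro nn_integral_mono) (auto intro: ennreal_leI)
  also have "\<dots> = ennreal C * emeasure M (space M)" by simp
  also have "\<dots> < \<infinity>" by (simp add: ennreal_mult_eq_top_iff less_top[symmetric])
  finally show "emeasure (distr (density M g) borel (\<lambda>x. x i)) (space (distr (density M g) borel (\<lambda>x. x i))) \<noteq> \<infinity>"
    by simp
qed

lemma cos_iexp_id: "complex_of_real (1 + cos th) * iexp a = iexp a + (iexp (a + th) + iexp (a + - th)) / 2"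
proof -
  have c: "complex_of_real (cos th) = (iexp th + iexp (- th)) / 2"
    by (simp add: cos_of_real[symmetric] cos_exp_eq)
  have e: "iexp (a + th) = iexp a * iexp th" "iexp (a + - th) = iexp a * iexp (- th)"
    by (simp_all only: of_real_add of_real_minus distrib_left exp_add mult_minus_right)
  have "complex_of_real (1 + cos th) * iexp a = iexp a + complex_of_real (cos th) * iexp a"
    by (simp add: distrib_right)
  also have "\<dots> = iexp a + ((iexp th + iexp (- th)) / 2) * iexp a" by (simp only: c)
  also have "\<dots> = iexp a + (iexp (a + th) + iexp (a + - th)) / 2" unfolding e by (simp add: field_simps)
  finally show ?thesis .
qed

lemma sin_iexp_id: "complex_of_real (1 + sin th) * iexp a = iexp a + (iexp (a + th) - iexp (a + - th)) / (2 * \<i>)"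
proof -
  have c: "complex_of_real (sin th) = (iexp th - iexp (- th)) / (2 * \<i>)"
    by (simp add: sin_of_real[symmetric] sin_exp_eq)
  have e: "iexp (a + th) = iexp a * iexp th" "iexp (a + - th) = iexp a * iexp (- th)"
    by (simp_all only: of_real_add of_real_minus distrib_left exp_add mult_minus_right)
  have "complex_of_real (1 + sin th) * iexp a = iexp a + complex_of_real (sin th) * iexp a"
    by (simp add: distrib_right)
  also have "\<dots> = iexp a + ((iexp th - iexp (- th)) / (2 * \<i>)) * iexp a" by (simp only: c)
  also have "\<dots> = iexp a + (iexp (a + th) - iexp (a + - th)) / (2 * \<i>)" unfolding e by (simp add: field_simps)
  finally show ?thesis .
qed

lemma meas_iexp_sum[measurable]:
  assumes "finite K"
  shows "(\<lambda>x. iexp (\<Sum>j\<in>K. t j * x j)) \<in> borel_measurable (PB K)"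
  by measurable

lemma iexp_cos_sin: "iexp th = complex_of_real (cos th) + \<i> * complex_of_real (sin th)"
  by (simp add: cis_conv_exp[symmetric] complex_eq_iff)

lemma sum_upd_insert:
  fixes s :: real and x u :: "'i \<Rightarrow> real"
  assumes "finite I" "i \<notin> I"
  shows "(\<Sum>j\<in>insert i I. (u(i:=s)) j * x j) = s * x i + (\<Sum>j\<in>I. u j * x j)"
proof -
  have "(\<Sum>j\<in>I. (u(i:=s)) j * x j) = (\<Sum>j\<in>I. u j * x j)"
    by (rule sum.cong) (use assms in auto)
  then show ?thesis using assms by simp
qed

lemma sum_delta_insert:
  fixes s :: real and x :: "'i \<Rightarrow> real"
  assumes "finite I" "i \<notin> I"
  shows "(\<Sum>j\<in>insert i I. (if j = i then s else 0) * x j) = s * x i"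
proof -
  have "(\<Sum>j\<in>I. (if j = i then s else 0) * x j) = 0"
    by (rule sum.neutral) (use assms in auto)
  then show ?thesis using assms by simp
qed

lemma integrable_iexp_bounded:
  fixes f :: "'a \<Rightarrow> real"
  assumes "finite_measure M" "f \<in> borel_measurable M"
  shows "integrable M (\<lambda>x. iexp (f x))"
proof -
  interpret finite_measure M by fact
  show ?thesis using assms(2) by (intro integrable_const_bound[where B=1]) auto
qed

lemma integrable_scaled_iexp:
  fixes f g :: "'a \<Rightarrow> real"
  assumes "finite_measure M" "f \<in> borel_measurable M" "g \<in> borel_measurable M" "\<And>x. \<bar>g x\<bar> \<le> C"
  shows "integrable M (\<lambda>x. g x *\<^sub>R iexp (f x))"
proof -
  interpret finite_measure M by fact
  show ?thesis using assms(2,3,4) by (intro integrable_const_bound[where B=C]) (auto simp: norm_mult)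
qed

lemma integrable_scaled_ind:
  fixes g :: "'a \<Rightarrow> real"
  assumes "finite_measure M" "g \<in> borel_measurable M" "\<And>x. \<bar>g x\<bar> \<le> C" "h \<in> borel_measurable M"
    "B \<in> sets borel"
  shows "integrable M (\<lambda>x. g x *\<^sub>R complex_of_real (indicator B (h x)))"
proof -
  interpret finite_measure M by fact
  have C: "0 \<le> C" using assms(3)[of undefined] by simp
  show ?thesis
  proof (rule integrable_const_bound[where B=C])
    show "AE x in M. norm (g x *\<^sub>R complex_of_real (indicator B (h x))) \<le> C"
      using assms(3) C by (auto simp: norm_mult indicator_def)
    show "(\<lambda>x. g x *\<^sub>R complex_of_real (indicator B (h x))) \<in> borel_measurable M"
      using assms(2,4,5) by measurable
  qed
qed

lemma cramer_wold:
  assumes "finite I"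
  shows "finite_measure P \<Longrightarrow> finite_measure Q \<Longrightarrow> sets P = sets (PB I) \<Longrightarrow> sets Q = sets (PB I) \<Longrightarrow>
     (\<And>t. (CLINT x|P. iexp (\<Sum>j\<in>I. t j * x j)) = (CLINT x|Q. iexp (\<Sum>j\<in>I. t j * x j))) \<Longrightarrow> P = Q"
  using assms
proof (induction I arbitrary: P Q rule: finite_induct)
  case empty
  interpret P: finite_measure P by fact
  interpret Q: finite_measure Q by fact
  have sp: "space P = {\<lambda>_. undefined}" "space Q = {\<lambda>_. undefined}"
    using sets_eq_imp_space_eq[OF empty(3)] sets_eq_imp_space_eq[OF empty(4)] by (simp_all add: space_PiM_empty)
  have "complex_of_real (measure P (space P)) = complex_of_real (measure Q (space Q))"
    using empty(5)[of "\<lambda>_. 0"] by simp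
  then have m: "emeasure P (space P) = emeasure Q (space Q)"
    by (simp add: P.emeasure_eq_measure Q.emeasure_eq_measure)
  show "P = Q"
  proof (rule measure_eqI)
    show "sets P = sets Q" using empty by simp
    fix A assume "A \<in> sets P"
    then have "A = {} \<or> A = {\<lambda>_. undefined}" using empty(3) by (simp add: sets_PiM_empty)
    then show "emeasure P A = emeasure Q A" using m sp by auto
  qed
next
  case (insert i I)
  note fin = insert(1) and iI = insert(2) and IH = insert(3)
  interpret P: finite_measure P by fact
  interpret Q: finite_measure Q by fact
  let ?K = "insert i I"
  have finK: "finite ?K" using fin by simp
  have sP: "sets P = sets (PB ?K)" and sQ: "sets Q = sets (PB ?K)" by fact+
  have hyp: "\<And>t. (CLINT x|P. iexp (\<Sum>j\<in>?K. t j * x j)) = (CLINT x|Q. iexp (\<Sum>j\<in>?K. t j * x j))" by fact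
  have measP: "\<And>f. f \<in> borel_measurable (PB ?K) \<Longrightarrow> f \<in> borel_measurable P"
    using measurable_cong_sets[OF sP refl] by blast
  have measQ: "\<And>f. f \<in> borel_measurable (PB ?K) \<Longrightarrow> f \<in> borel_measurable Q"
    using measurable_cong_sets[OF sQ refl] by blast
  have mi[measurable]: "(\<lambda>x. x i) \<in> borel_measurable (PB ?K)" by simp
  have mth[measurable]: "(\<lambda>x. \<Sum>j\<in>I. t j * x j) \<in> borel_measurable (PB ?K)" for t
    using fin by measurable
  have mK[measurable]: "(\<lambda>x. \<Sum>j\<in>?K. t j * x j) \<in> borel_measurable (PB ?K)" for t
    using finK by measurable

  have KEY: "(CLINT x|P. indicator B (x i) *\<^sub>R iexp (\<Sum>j\<in>I. t j * x j))
           = (CLINT x|Q. indicator B (x i) *\<^sub>R iexp (\<Sum>j\<in>I. t j * x j))"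
    if B: "B \<in> sets borel" for B t
  proof -
    define th where "th = (\<lambda>x::'a \<Rightarrow> real. \<Sum>j\<in>I. t j * x j)"
    have mth'[measurable]: "th \<in> borel_measurable (PB ?K)" unfolding th_def by simp
    have G: "(CLINT x|P. g x *\<^sub>R complex_of_real (indicator B (x i)))
           = (CLINT x|Q. g x *\<^sub>R complex_of_real (indicator B (x i)))"
      if g: "g \<in> borel_measurable (PB ?K)" "\<And>x. 0 \<le> g x" "\<And>x. g x \<le> 2"
        and ch: "\<And>s. (CLINT x|P. g x *\<^sub>R iexp (s * x i)) = (CLINT x|Q. g x *\<^sub>R iexp (s * x i))" for g
    proof -
      have eq: "distr (density P g) borel (\<lambda>x. x i) = distr (density Q g) borel (\<lambda>x. x i)"
      proof (rule fin_levy)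
        show "finite_measure (distr (density P g) borel (\<lambda>x. x i))"
          by (rule fin_distr_dens[OF P.finite_measure_axioms sP _ g]) auto
        show "finite_measure (distr (density Q g) borel (\<lambda>x. x i))"
          by (rule fin_distr_dens[OF Q.finite_measure_axioms sQ _ g]) auto
        fix s
        show "(CLINT x|distr (density P g) borel (\<lambda>x. x i). iexp (s*x)) = (CLINT x|distr (density Q g) borel (\<lambda>x. x i). iexp (s*x))"
          using ch[of s] by (simp add: int_distr_dens[OF sP _ g(1,2)] int_distr_dens[OF sQ _ g(1,2)])
      qed auto
      have "(CLINT x|P. g x *\<^sub>R complex_of_real (indicator B (x i)))
          = (CLINT y|distr (density P g) borel (\<lambda>x. x i). complex_of_real (indicator B y))"
        using B by (subst int_distr_dens[OF sP _ g(1,2)]) auto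
      also have "\<dots> = (CLINT y|distr (density Q g) borel (\<lambda>x. x i). complex_of_real (indicator B y))"
        using eq by simp
      also have "\<dots> = (CLINT x|Q. g x *\<^sub>R complex_of_real (indicator B (x i)))"
        using B by (subst int_distr_dens[OF sQ _ g(1,2)]) auto
      finally show ?thesis .
    qed
    have u0: "(\<Sum>j\<in>?K. (if j = i then s else 0) * x j) = s * x i" for s and x :: "'a \<Rightarrow> real"
      by (rule sum_delta_insert[OF fin iI])
    have u1: "(\<Sum>j\<in>?K. (t(i:=s)) j * x j) = s * x i + th x" for s x
      unfolding th_def by (rule sum_upd_insert[OF fin iI])
    have u2: "(\<Sum>j\<in>?K. ((\<lambda>j. - t j)(i:=s)) j * x j) = s * x i + - th x" for s x
      unfolding th_def by (subst sum_upd_insert[OF fin iI]) (simp add: sum_negf)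
    have int: "integrable M (\<lambda>x. iexp (\<Sum>j\<in>?K. u j * x j))"
      if "finite_measure M" "sets M = sets (PB ?K)" for M u
      using that by (intro integrable_iexp_bounded) (auto simp: measurable_cong_sets[OF that(2) refl])
    have Ccos: "(CLINT x|M. (1 + cos (th x)) *\<^sub>R iexp (s * x i))
       = (CLINT x|M. iexp (\<Sum>j\<in>?K. (if j = i then s else 0) * x j))
         + ((CLINT x|M. iexp (\<Sum>j\<in>?K. (t(i:=s)) j * x j)) + (CLINT x|M. iexp (\<Sum>j\<in>?K. ((\<lambda>j. - t j)(i:=s)) j * x j))) / 2"
      if "finite_measure M" "sets M = sets (PB ?K)" for M s
    proof -
      have "(CLINT x|M. (1 + cos (th x)) *\<^sub>R iexp (s * x i))
          = (CLINT x|M. iexp (\<Sum>j\<in>?K. (if j = i then s else 0) * x j)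
             + (iexp (\<Sum>j\<in>?K. (t(i:=s)) j * x j) + iexp (\<Sum>j\<in>?K. ((\<lambda>j. - t j)(i:=s)) j * x j)) / 2)"
        by (intro Bochner_Integration.integral_cong refl) (simp only: u0 u1 u2 scaleR_conv_of_real cos_iexp_id)
      also have "\<dots> = (CLINT x|M. iexp (\<Sum>j\<in>?K. (if j = i then s else 0) * x j))
         + ((CLINT x|M. iexp (\<Sum>j\<in>?K. (t(i:=s)) j * x j)) + (CLINT x|M. iexp (\<Sum>j\<in>?K. ((\<lambda>j. - t j)(i:=s)) j * x j))) / 2"
        using int[OF that, of "\<lambda>j. if j = i then s else 0"] int[OF that, of "t(i:=s)"]
          int[OF that, of "(\<lambda>j. - t j)(i:=s)"]
        by (simp only: Bochner_Integration.integral_add integral_divide_zero integrable_divide_zero Bochner_Integration.integrable_add)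
      finally show ?thesis .
    qed
    have Csin: "(CLINT x|M. (1 + sin (th x)) *\<^sub>R iexp (s * x i))
       = (CLINT x|M. iexp (\<Sum>j\<in>?K. (if j = i then s else 0) * x j))
         + ((CLINT x|M. iexp (\<Sum>j\<in>?K. (t(i:=s)) j * x j)) - (CLINT x|M. iexp (\<Sum>j\<in>?K. ((\<lambda>j. - t j)(i:=s)) j * x j))) / (2 * \<i>)"
      if "finite_measure M" "sets M = sets (PB ?K)" for M s
    proof -
      have "(CLINT x|M. (1 + sin (th x)) *\<^sub>R iexp (s * x i))
          = (CLINT x|M. iexp (\<Sum>j\<in>?K. (if j = i then s else 0) * x j)
             + (iexp (\<Sum>j\<in>?K. (t(i:=s)) j * x j) - iexp (\<Sum>j\<in>?K. ((\<lambda>j. - t j)(i:=s)) j * x j)) / (2 * \<i>))"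
        by (intro Bochner_Integration.integral_cong refl) (simp only: u0 u1 u2 scaleR_conv_of_real sin_iexp_id)
      also have "\<dots> = (CLINT x|M. iexp (\<Sum>j\<in>?K. (if j = i then s else 0) * x j))
         + ((CLINT x|M. iexp (\<Sum>j\<in>?K. (t(i:=s)) j * x j)) - (CLINT x|M. iexp (\<Sum>j\<in>?K. ((\<lambda>j. - t j)(i:=s)) j * x j))) / (2 * \<i>)"
        using int[OF that, of "\<lambda>j. if j = i then s else 0"] int[OF that, of "t(i:=s)"]
          int[OF that, of "(\<lambda>j. - t j)(i:=s)"]
        by (simp only: Bochner_Integration.integral_add Bochner_Integration.integral_diff integral_divide_zero integrable_divide_zero Bochner_Integration.integrable_diff)
      finally show ?thesis .
    qed
    have C1: "(CLINT x|M. (\<lambda>_. 1::real) x *\<^sub>R iexp (s * x i))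
       = (CLINT x|M. iexp (\<Sum>j\<in>?K. (if j = i then s else 0) * x j))" for M s
      by (simp only: u0 scaleR_one)
    have Ec: "(CLINT x|P. (\<lambda>x. 1 + cos (th x)) x *\<^sub>R complex_of_real (indicator B (x i)))
           = (CLINT x|Q. (\<lambda>x. 1 + cos (th x)) x *\<^sub>R complex_of_real (indicator B (x i)))"
    proof (rule G)
      fix s show "(CLINT x|P. (1 + cos (th x)) *\<^sub>R iexp (s * x i)) = (CLINT x|Q. (1 + cos (th x)) *\<^sub>R iexp (s * x i))"
        by (simp only: Ccos[OF P.finite_measure_axioms sP] Ccos[OF Q.finite_measure_axioms sQ] hyp)
    next show "(\<lambda>x. 1 + cos (th x)) \<in> borel_measurable (PB ?K)" by measurable
    next fix x show "0 \<le> 1 + cos (th x)" using cos_ge_minus_one[of "th x"] by linarith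
    next fix x show "1 + cos (th x) \<le> 2" using cos_le_one[of "th x"] by linarith
    qed
    have Es: "(CLINT x|P. (\<lambda>x. 1 + sin (th x)) x *\<^sub>R complex_of_real (indicator B (x i)))
           = (CLINT x|Q. (\<lambda>x. 1 + sin (th x)) x *\<^sub>R complex_of_real (indicator B (x i)))"
    proof (rule G)
      fix s show "(CLINT x|P. (1 + sin (th x)) *\<^sub>R iexp (s * x i)) = (CLINT x|Q. (1 + sin (th x)) *\<^sub>R iexp (s * x i))"
        by (simp only: Csin[OF P.finite_measure_axioms sP] Csin[OF Q.finite_measure_axioms sQ] hyp)
    next show "(\<lambda>x. 1 + sin (th x)) \<in> borel_measurable (PB ?K)" by measurable
    next fix x show "0 \<le> 1 + sin (th x)" using sin_ge_minus_one[of "th x"] by linarith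
    next fix x show "1 + sin (th x) \<le> 2" using sin_le_one[of "th x"] by linarith
    qed
    have E1: "(CLINT x|P. (\<lambda>_. 1::real) x *\<^sub>R complex_of_real (indicator B (x i)))
           = (CLINT x|Q. (\<lambda>_. 1::real) x *\<^sub>R complex_of_real (indicator B (x i)))"
    proof (rule G)
      fix s show "(CLINT x|P. (\<lambda>_. 1::real) x *\<^sub>R iexp (s * x i)) = (CLINT x|Q. (\<lambda>_. 1::real) x *\<^sub>R iexp (s * x i))"
        by (simp only: C1 hyp)
    qed auto
    have dec: "(CLINT x|M. indicator B (x i) *\<^sub>R iexp (th x))
       = ((CLINT x|M. (\<lambda>x. 1 + cos (th x)) x *\<^sub>R complex_of_real (indicator B (x i)))
           - (CLINT x|M. (\<lambda>_. 1::real) x *\<^sub>R complex_of_real (indicator B (x i))))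
         + \<i> * ((CLINT x|M. (\<lambda>x. 1 + sin (th x)) x *\<^sub>R complex_of_real (indicator B (x i)))
           - (CLINT x|M. (\<lambda>_. 1::real) x *\<^sub>R complex_of_real (indicator B (x i))))"
      if M: "finite_measure M" "sets M = sets (PB ?K)" for M
    proof -
      have mM: "\<And>f. f \<in> borel_measurable (PB ?K) \<Longrightarrow> f \<in> borel_measurable M"
        using measurable_cong_sets[OF M(2) refl] by blast
      have "\<bar>1 + cos (th x)\<bar> \<le> 2" for x using cos_ge_minus_one[of "th x"] cos_le_one[of "th x"] by linarith
      then have ic: "integrable M (\<lambda>x. (\<lambda>x. 1 + cos (th x)) x *\<^sub>R complex_of_real (indicator B (x i)))"
        by (intro integrable_scaled_ind[OF M(1) _ _ _ B, where C=2]) (auto intro!: mM)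
      have "\<bar>1 + sin (th x)\<bar> \<le> 2" for x using sin_ge_minus_one[of "th x"] sin_le_one[of "th x"] by linarith
      then have is': "integrable M (\<lambda>x. (\<lambda>x. 1 + sin (th x)) x *\<^sub>R complex_of_real (indicator B (x i)))"
        by (intro integrable_scaled_ind[OF M(1) _ _ _ B, where C=2]) (auto intro!: mM)
      have i1: "integrable M (\<lambda>x. (\<lambda>_. 1::real) x *\<^sub>R complex_of_real (indicator B (x i)))"
        by (rule integrable_scaled_ind[OF M(1) _ _ _ B, where C=1]) (auto intro!: mM)
      have "(CLINT x|M. indicator B (x i) *\<^sub>R iexp (th x))
         = (CLINT x|M. ((\<lambda>x. 1 + cos (th x)) x *\<^sub>R complex_of_real (indicator B (x i))
           - (\<lambda>_. 1::real) x *\<^sub>R complex_of_real (indicator B (x i)))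
         + \<i> * ((\<lambda>x. 1 + sin (th x)) x *\<^sub>R complex_of_real (indicator B (x i))
           - (\<lambda>_. 1::real) x *\<^sub>R complex_of_real (indicator B (x i))))"
        by (intro Bochner_Integration.integral_cong refl)
          (simp add: iexp_cos_sin scaleR_conv_of_real algebra_simps)
      also have "\<dots> = ((CLINT x|M. (\<lambda>x. 1 + cos (th x)) x *\<^sub>R complex_of_real (indicator B (x i)))
           - (CLINT x|M. (\<lambda>_. 1::real) x *\<^sub>R complex_of_real (indicator B (x i))))
         + \<i> * ((CLINT x|M. (\<lambda>x. 1 + sin (th x)) x *\<^sub>R complex_of_real (indicator B (x i)))
           - (CLINT x|M. (\<lambda>_. 1::real) x *\<^sub>R complex_of_real (indicator B (x i))))"
        using ic is' i1 by (simp only: Bochner_Integration.integral_add Bochner_Integration.integral_diff integral_mult_right_zero Bochner_Integration.integrable_diff integrable_mult_right)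
      finally show ?thesis .
    qed
    have "(CLINT x|P. indicator B (x i) *\<^sub>R iexp (th x)) = (CLINT x|Q. indicator B (x i) *\<^sub>R iexp (th x))"
      by (simp only: dec[OF P.finite_measure_axioms sP] dec[OF Q.finite_measure_axioms sQ] Ec Es E1)
    then show ?thesis by (simp only: th_def)
  qed
  have box: "emeasure P (Pi\<^sub>E ?K A) = emeasure Q (Pi\<^sub>E ?K A)" if A: "A \<in> (\<Pi> j\<in>?K. sets borel)" for A
  proof -
    have Ai[measurable]: "A i \<in> sets borel" using A by auto
    define R where "R M = distr (density M (\<lambda>x. ennreal (indicator (A i) (x i) :: real))) (PB I) (\<lambda>x. restrict x I)" for M
    have props: "finite_measure (R M) \<and> sets (R M) = sets (PB I) \<and> emeasure (R M) (Pi\<^sub>E I A) = emeasure M (Pi\<^sub>E ?K A)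
       \<and> (\<forall>t. (CLINT y|R M. iexp (\<Sum>j\<in>I. t j * y j)) = (CLINT x|M. indicator (A i) (x i) *\<^sub>R iexp (\<Sum>j\<in>I. t j * x j)))"
      if M: "finite_measure M" "sets M = sets (PB ?K)" for M
    proof (intro conjI allI)
      interpret finite_measure M by fact
      have mM: "\<And>f. f \<in> borel_measurable (PB ?K) \<Longrightarrow> f \<in> borel_measurable M"
        using measurable_cong_sets[OF M(2) refl] by blast
      have mg[measurable]: "(\<lambda>x. indicator (A i) (x i) :: real) \<in> borel_measurable M"
        by (intro mM) measurable
      have mr[measurable]: "(\<lambda>x. restrict x I) \<in> measurable M (PB I)"
        by (subst measurable_cong_sets[OF M(2) refl]) (rule measurable_restrict_subset, auto)
      have spM: "space M = space (PB ?K)" using sets_eq_imp_space_eq[OF M(2)] .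
      show "sets (R M) = sets (PB I)" unfolding R_def by simp
      have "emeasure (R M) (space (R M)) = (\<integral>\<^sup>+ x. ennreal (indicator (A i) (x i)) \<partial>M)"
      proof -
        have pre: "(\<lambda>x. restrict x I) -` space (PB I) \<inter> space M = space M" using measurable_space[OF mr] by auto
        show ?thesis
          unfolding R_def by (subst emeasure_distr) (auto simp: pre emeasure_density intro!: nn_integral_cong)
      qed
      also have "\<dots> \<le> (\<integral>\<^sup>+ x. 1 \<partial>M)" by (intro nn_integral_mono) (auto simp: indicator_def)
      also have "\<dots> < \<infinity>" by (simp add: less_top[symmetric])
      finally show "finite_measure (R M)" by (intro finite_measureI) simp
      have boxI: "Pi\<^sub>E I A \<in> sets (PB I)" using A fin by (intro sets_PiM_I_finite) auto
      have boxK: "Pi\<^sub>E ?K A \<in> sets M" unfolding M(2) using A finK by (intro sets_PiM_I_finite) auto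
      have "emeasure (R M) (Pi\<^sub>E I A) = (\<integral>\<^sup>+ x. ennreal (indicator (A i) (x i)) * indicator ((\<lambda>x. restrict x I) -` Pi\<^sub>E I A \<inter> space M) x \<partial>M)"
        unfolding R_def using boxI by (subst emeasure_distr) (auto simp: emeasure_density)
      also have "\<dots> = (\<integral>\<^sup>+ x. indicator (Pi\<^sub>E ?K A) x \<partial>M)"
        by (intro nn_integral_cong) (auto simp: spM space_PiM PiE_iff split: split_indicator)
      also have "\<dots> = emeasure M (Pi\<^sub>E ?K A)" using boxK by simp
      finally show "emeasure (R M) (Pi\<^sub>E I A) = emeasure M (Pi\<^sub>E ?K A)" .
      fix t
      have "(CLINT y|R M. iexp (\<Sum>j\<in>I. t j * y j)) = (CLINT x|density M (\<lambda>x. ennreal (indicator (A i) (x i) :: real)). iexp (\<Sum>j\<in>I. t j * restrict x I j))"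
        unfolding R_def using fin by (subst integral_distr) auto
      also have "\<dots> = (CLINT x|M. indicator (A i) (x i) *\<^sub>R iexp (\<Sum>j\<in>I. t j * restrict x I j))"
        using fin by (subst integral_density) (auto intro!: mM)
      also have "\<dots> = (CLINT x|M. indicator (A i) (x i) *\<^sub>R iexp (\<Sum>j\<in>I. t j * x j))"
        by (intro Bochner_Integration.integral_cong refl arg_cong[where f="\<lambda>z. _ *\<^sub>R iexp z"] sum.cong) auto
      finally show "(CLINT y|R M. iexp (\<Sum>j\<in>I. t j * y j)) = (CLINT x|M. indicator (A i) (x i) *\<^sub>R iexp (\<Sum>j\<in>I. t j * x j))" .
    qed
    note pP = props[OF P.finite_measure_axioms sP] and pQ = props[OF Q.finite_measure_axioms sQ]
    have "R P = R Q"
    proof (rule IH)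
      show "finite_measure (R P)" "finite_measure (R Q)" "sets (R P) = sets (PB I)" "sets (R Q) = sets (PB I)"
        using pP pQ by auto
      fix t
      have a: "(CLINT y|R P. iexp (\<Sum>j\<in>I. t j * y j)) = (CLINT x|P. indicator (A i) (x i) *\<^sub>R iexp (\<Sum>j\<in>I. t j * x j))"
        using pP by blast
      have b: "(CLINT y|R Q. iexp (\<Sum>j\<in>I. t j * y j)) = (CLINT x|Q. indicator (A i) (x i) *\<^sub>R iexp (\<Sum>j\<in>I. t j * x j))"
        using pQ by blast
      show "(CLINT y|R P. iexp (\<Sum>j\<in>I. t j * y j)) = (CLINT y|R Q. iexp (\<Sum>j\<in>I. t j * y j))"
        by (simp only: a b KEY[OF Ai])
    qed
    then show ?thesis
      using props[OF P.finite_measure_axioms sP] props[OF Q.finite_measure_axioms sQ] by simp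
  qed
  let ?\<Omega> = "\<Pi>\<^sub>E j\<in>?K. space (borel :: real measure)"
  show "P = Q"
  proof (rule measure_eqI_generator_eq[where E="prod_algebra ?K (\<lambda>_. borel :: real measure)" and \<Omega>="?\<Omega>" and A="\<lambda>_. ?\<Omega>"])
    show "Int_stable (prod_algebra ?K (\<lambda>_. borel :: real measure))" by (rule Int_stable_prod_algebra)
    show "prod_algebra ?K (\<lambda>_. borel :: real measure) \<subseteq> Pow ?\<Omega>" by (rule prod_algebra_sets_into_space)
    show "sets P = sigma_sets ?\<Omega> (prod_algebra ?K (\<lambda>_. borel :: real measure))" using sP by (simp add: sets_PiM)
    show "sets Q = sigma_sets ?\<Omega> (prod_algebra ?K (\<lambda>_. borel :: real measure))" using sQ by (simp add: sets_PiM)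
    fix X assume "X \<in> prod_algebra ?K (\<lambda>_. borel :: real measure)"
    then obtain A where "X = Pi\<^sub>E ?K A" "A \<in> (\<Pi> j\<in>?K. sets borel)" by (rule prod_algebraE_all)
    then show "emeasure P X = emeasure Q X" using box by simp
  next
    show "range (\<lambda>_. ?\<Omega>) \<subseteq> prod_algebra ?K (\<lambda>_. borel :: real measure)"
      using prod_algebraI_finite[OF finK, of "\<lambda>_. UNIV" "\<lambda>_. borel"] by auto
    show "(\<Union>i. ?\<Omega>) = ?\<Omega>" by simp
    fix j :: nat
    show "emeasure P ?\<Omega> \<noteq> \<infinity>" by simp
  qed
qed

lemma gauss_shift:
  assumes v: "0 \<le> v"
  shows "distr (gauss 0 v) borel (\<lambda>w. w + a) = gauss a v"
proof (rule gauss_eqI[OF _ v])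
  interpret G: real_distribution "gauss 0 v" by (rule real_distribution_gauss[OF v])
  show "real_distribution (distr (gauss 0 v) borel (\<lambda>w. w + a))"
    unfolding real_distribution_def real_distribution_axioms_def
    by (auto intro!: G.prob_space_distr)
  fix t
  have "char (distr (gauss 0 v) borel (\<lambda>w. w + a)) t = (CLINT w|gauss 0 v. iexp (t * (w + a)))"
    unfolding char_def by (subst integral_distr) auto
  also have "\<dots> = (CLINT w|gauss 0 v. iexp (t * a) * iexp (t * w))"
    by (intro Bochner_Integration.integral_cong refl) (simp add: algebra_simps flip: exp_add)
  also have "\<dots> = iexp (t * a) * char (gauss 0 v) t"
    unfolding char_def by simp
  also have "\<dots> = exp (\<i> * complex_of_real (t * a) - complex_of_real (t\<^sup>2 * v / 2))"
    using v by (simp add: char_gauss flip: exp_add)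
  finally show "char (distr (gauss 0 v) borel (\<lambda>w. w + a)) t = exp (\<i> * complex_of_real (t * a) - complex_of_real (t\<^sup>2 * v / 2))" .
qed

lemma space_gauss[simp]: "space (gauss mu v) = UNIV"
  by (simp add: gauss_def)

lemma sets_gauss[simp, measurable_cong]: "sets (gauss mu v) = sets borel"
  by (simp add: gauss_def)

lemma emeasure_gauss_shift:
  assumes v: "0 \<le> v" and A: "A \<in> sets borel"
  shows "emeasure (gauss 0 v) {w. w + a \<in> A} = emeasure (gauss a v) A"
proof -
  have "emeasure (gauss a v) A = emeasure (distr (gauss 0 v) borel (\<lambda>w. w + a)) A"
    using gauss_shift[OF v] by simp
  also have "\<dots> = emeasure (gauss 0 v) {w. w + a \<in> A}"
    using A by (subst emeasure_distr) (auto simp: vimage_def)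
  finally show ?thesis by simp
qed

abbreviation "PU \<equiv> PiM UNIV (\<lambda>_. borel :: real measure)"

lemma char_as_integral:
  assumes "f \<in> borel_measurable M"
  shows "(CLINT x|M. iexp (f x)) = char (distr M borel f) 1"
  unfolding char_def using assms by (subst integral_distr) auto

lemma cond_gauss:
  fixes M :: "'a measure" and Y :: "'a \<Rightarrow> 'j \<Rightarrow> real" and e X :: "'a \<Rightarrow> real"
    and L :: "('j \<Rightarrow> real) \<Rightarrow> real" and mY qY :: "('j \<Rightarrow> real) \<Rightarrow> real"
  assumes P: "prob_space M" and J: "finite J" "j0 \<notin> J"
    and Ym[measurable]: "Y \<in> measurable M PU"
    and Y0: "\<And>\<omega> j. \<omega> \<in> space M \<Longrightarrow> j \<notin> J \<Longrightarrow> Y \<omega> j = 0"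
    and em[measurable]: "e \<in> borel_measurable M"
    and Lm[measurable]: "L \<in> borel_measurable PU"
    and XeL: "\<And>\<omega>. \<omega> \<in> space M \<Longrightarrow> X \<omega> = e \<omega> + L (Y \<omega>)"
    and v: "0 \<le> v"
    and H: "\<And>c0 c. distr M borel (\<lambda>\<omega>. c0 * e \<omega> + (\<Sum>j\<in>J. c j * Y \<omega> j)) = gauss (mY c) (c0\<^sup>2 * v + qY c)"
    and q: "\<And>c. 0 \<le> qY c"
  shows "has_cond_distr M X PU Y (\<lambda>z. gauss (L z) v)"
proof -
  interpret prob_space M by (rule P)
  define I where "I = insert j0 J"
  have finI: "finite I" using J unfolding I_def by simp
  define V where "V \<omega> = (\<lambda>j\<in>I. if j = j0 then e \<omega> else Y \<omega> j)" for \<omega>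
  define N where "N = distr M PU Y"
  define G where "G = gauss 0 v"
  define T where "T = (\<lambda>(y::'j \<Rightarrow> real,w::real). \<lambda>j\<in>I. if j = j0 then w else y j)"
  interpret N: prob_space N unfolding N_def by (rule prob_space_distr) simp
  interpret G: real_distribution G unfolding G_def by (rule real_distribution_gauss[OF v])
  interpret NG: pair_prob_space N G ..
  have Ycomp[measurable]: "(\<lambda>\<omega>. Y \<omega> j) \<in> borel_measurable M" for j
    using measurable_compose[OF Ym measurable_component_singleton[of j UNIV "\<lambda>_. borel"]] by simp
  have Vm[measurable]: "V \<in> measurable M (PB I)"
    unfolding V_def by measurable
  have Tm[measurable]: "T \<in> measurable (N \<Otimes>\<^sub>M G) (PB I)"
  proof -
    have "(\<lambda>p. \<lambda>j\<in>I. if j = j0 then snd p else fst p j) \<in> measurable (N \<Otimes>\<^sub>M G) (PB I)"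
    proof (rule measurable_restrict)
      fix j assume "j \<in> I"
      have [measurable]: "(\<lambda>p. fst p j) \<in> borel_measurable (N \<Otimes>\<^sub>M G)"
        using measurable_compose[OF measurable_fst measurable_component_singleton[of j UNIV "\<lambda>_. borel"]]
        by (simp add: N_def G_def)
      show "(\<lambda>p. if j = j0 then snd p else fst p j) \<in> borel_measurable (N \<Otimes>\<^sub>M G)"
        by (cases "j = j0") (simp_all add: G_def)
    qed
    then show ?thesis unfolding T_def by (simp add: case_prod_beta')
  qed
  have PNG: "prob_space (N \<Otimes>\<^sub>M G)" by (rule prob_space_pair) unfold_locales
  have sumI: "(\<Sum>j\<in>I. t j * (if j = j0 then a else b j)) = t j0 * a + (\<Sum>j\<in>J. t j * b j)" for t a b
  proof -
    have "(\<Sum>j\<in>J. t j * (if j = j0 then a else b j)) = (\<Sum>j\<in>J. t j * b j)"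
      by (rule sum.cong) (use J in auto)
    then show ?thesis unfolding I_def using J by simp
  qed
  have FmN[measurable]: "(\<lambda>y. iexp (\<Sum>j\<in>J. t j * y j)) \<in> borel_measurable N" for t
    unfolding N_def by simp
  have step1: "distr M (PB I) V = distr (N \<Otimes>\<^sub>M G) (PB I) T"
  proof (rule cramer_wold[OF finI])
    show "finite_measure (distr M (PB I) V)"
      using prob_space_distr[OF Vm] by (simp add: prob_space_def)
    show "finite_measure (distr (N \<Otimes>\<^sub>M G) (PB I) T)"
      using prob_space.prob_space_distr[OF PNG Tm] by (simp add: prob_space_def)
    show "sets (distr M (PB I) V) = sets (PB I)" "sets (distr (N \<Otimes>\<^sub>M G) (PB I) T) = sets (PB I)" by simp_all
    fix t :: "'j \<Rightarrow> real"
    have "(CLINT x|distr M (PB I) V. iexp (\<Sum>j\<in>I. t j * x j)) = (CLINT \<omega>|M. iexp (\<Sum>j\<in>I. t j * V \<omega> j))"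
      using finI by (subst integral_distr) auto
    also have "\<dots> = (CLINT \<omega>|M. iexp (t j0 * e \<omega> + (\<Sum>j\<in>J. t j * Y \<omega> j)))"
    proof (intro Bochner_Integration.integral_cong refl arg_cong[where f=iexp])
      fix \<omega>
      have "(\<Sum>j\<in>I. t j * V \<omega> j) = (\<Sum>j\<in>I. t j * (if j = j0 then e \<omega> else Y \<omega> j))"
        unfolding V_def by (rule sum.cong) auto
      then show "(\<Sum>j\<in>I. t j * V \<omega> j) = t j0 * e \<omega> + (\<Sum>j\<in>J. t j * Y \<omega> j)" by (simp add: sumI)
    qed
    also have "\<dots> = char (gauss (mY t) ((t j0)\<^sup>2 * v + qY t)) 1"
      by (subst char_as_integral) (simp_all add: H)
    also have "\<dots> = exp (\<i> * complex_of_real (mY t) - complex_of_real (((t j0)\<^sup>2 * v + qY t) / 2))"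
      using v q[of t] by (simp add: char_gauss)
    finally have L: "(CLINT x|distr M (PB I) V. iexp (\<Sum>j\<in>I. t j * x j)) = exp (\<i> * complex_of_real (mY t) - complex_of_real (((t j0)\<^sup>2 * v + qY t) / 2))" .
    have "(CLINT x|distr (N \<Otimes>\<^sub>M G) (PB I) T. iexp (\<Sum>j\<in>I. t j * x j)) = (CLINT p|N \<Otimes>\<^sub>M G. iexp (\<Sum>j\<in>I. t j * T p j))"
      using finI by (subst integral_distr) auto
    also have "\<dots> = (CLINT p|N \<Otimes>\<^sub>M G. (\<lambda>y w. iexp (\<Sum>j\<in>J. t j * y j) * iexp (t j0 * w)) (fst p) (snd p))"
    proof (intro Bochner_Integration.integral_cong refl)
      fix p :: "('j \<Rightarrow> real) \<times> real"
      have "(\<Sum>j\<in>I. t j * T p j) = (\<Sum>j\<in>I. t j * (if j = j0 then snd p else fst p j))"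
        unfolding T_def by (rule sum.cong) (auto simp: case_prod_beta')
      then show "iexp (\<Sum>j\<in>I. t j * T p j) = (\<lambda>y w. iexp (\<Sum>j\<in>J. t j * y j) * iexp (t j0 * w)) (fst p) (snd p)"
        by (simp add: sumI algebra_simps flip: exp_add)
    qed
    also have "\<dots> = (CLINT y|N. (CLINT w|G. iexp (\<Sum>j\<in>J. t j * y j) * iexp (t j0 * w)))"
    proof -
      have "integrable (N \<Otimes>\<^sub>M G) (case_prod (\<lambda>y w. iexp (\<Sum>j\<in>J. t j * y j) * iexp (t j0 * w)))"
      proof -
        have fm: "finite_measure (N \<Otimes>\<^sub>M G)" using PNG by (simp add: prob_space_def)
        have mf: "(\<lambda>(y, w). iexp (\<Sum>j\<in>J. t j * y j) * iexp (t j0 * w)) \<in> borel_measurable (N \<Otimes>\<^sub>M G)"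
          unfolding N_def G_def by measurable
        show ?thesis by (rule finite_measure.integrable_const_bound[where B=1, OF fm _ mf]) (auto simp: norm_mult)
      qed
      then have "(CLINT y|N. (CLINT w|G. iexp (\<Sum>j\<in>J. t j * y j) * iexp (t j0 * w)))
          = integral\<^sup>L (N \<Otimes>\<^sub>M G) (case_prod (\<lambda>y w. iexp (\<Sum>j\<in>J. t j * y j) * iexp (t j0 * w)))"
        by (rule NG.integral_fst)
      then show ?thesis by (simp only: case_prod_beta')
    qed
    also have "\<dots> = (CLINT y|N. iexp (\<Sum>j\<in>J. t j * y j)) * char G (t j0)"
      unfolding char_def by simp
    also have "(CLINT y|N. iexp (\<Sum>j\<in>J. t j * y j)) = (CLINT \<omega>|M. iexp (0 * e \<omega> + (\<Sum>j\<in>J. t j * Y \<omega> j)))"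
      unfolding N_def by (subst integral_distr) auto
    also have "\<dots> = char (gauss (mY t) (0\<^sup>2 * v + qY t)) 1"
      by (subst char_as_integral) (simp_all only: H, simp)
    finally have R: "(CLINT x|distr (N \<Otimes>\<^sub>M G) (PB I) T. iexp (\<Sum>j\<in>I. t j * x j))
       = char (gauss (mY t) (0\<^sup>2 * v + qY t)) 1 * char G (t j0)" .
    show "(CLINT x|distr M (PB I) V. iexp (\<Sum>j\<in>I. t j * x j)) = (CLINT x|distr (N \<Otimes>\<^sub>M G) (PB I) T. iexp (\<Sum>j\<in>I. t j * x j))"
      unfolding L R using v q[of t]
      by (simp add: G_def char_gauss flip: exp_add) (intro arg_cong[where f=exp], simp add: field_simps)
  qed
  define ext where "ext x = (\<lambda>j. if j \<in> J then x j else (0::real))" for x :: "'j \<Rightarrow> real"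
  have extm[measurable]: "ext \<in> measurable (PB I) PU"
    unfolding ext_def
  proof (rule measurable_PiM_single')
    fix j :: 'j
    show "(\<lambda>x. if j \<in> J then x j else 0) \<in> borel_measurable (PB I)"
      by (cases "j \<in> J") (auto simp: I_def)
  qed simp
  have extm'[measurable]: "ext \<in> measurable PU PU"
    unfolding ext_def
  proof (rule measurable_PiM_single')
    fix j :: 'j
    show "(\<lambda>x. if j \<in> J then x j else 0) \<in> borel_measurable PU"
      by (cases "j \<in> J") auto
  qed simp
  have extY: "ext (Y \<omega>) = Y \<omega>" if "\<omega> \<in> space M" for \<omega>
    using Y0[OF that] unfolding ext_def by auto
  show ?thesis unfolding has_cond_distr_def
  proof (intro ballI)
    fix A B assume A[measurable]: "A \<in> sets (borel :: real measure)" and B[measurable]: "B \<in> sets (PU :: ('j \<Rightarrow> real) measure)"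
    define S where "S = {x \<in> space (PB I). x j0 + L (ext x) \<in> A \<and> ext x \<in> B}"
    have j0I: "j0 \<in> I" unfolding I_def by simp
    have [measurable]: "(\<lambda>x. L (ext x)) \<in> borel_measurable (PB I)" using measurable_compose[OF extm Lm] .
    have [measurable]: "Measurable.pred (PB I) (\<lambda>x. ext x \<in> B)"
      by (rule measurable_compose[OF extm]) measurable
    have S[measurable]: "S \<in> sets (PB I)" unfolding S_def using j0I by measurable
    have "{\<omega> \<in> space M. X \<omega> \<in> A \<and> Y \<omega> \<in> B} = V -` S \<inter> space M"
    proof -
      have "V \<omega> j0 = e \<omega>" "ext (V \<omega>) = Y \<omega>" "V \<omega> \<in> space (PB I)" if "\<omega> \<in> space M" for \<omega>
        using Y0[OF that] measurable_space[OF Vm that] unfolding V_def ext_def I_def by (auto simp: J)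
      then show ?thesis unfolding S_def using XeL by auto
    qed
    then have "emeasure M {\<omega> \<in> space M. X \<omega> \<in> A \<and> Y \<omega> \<in> B} = emeasure (distr M (PB I) V) S"
      by (simp add: emeasure_distr)
    also have "\<dots> = emeasure (distr (N \<Otimes>\<^sub>M G) (PB I) T) S" by (simp only: step1)
    also have "\<dots> = emeasure (N \<Otimes>\<^sub>M G) (T -` S \<inter> space (N \<Otimes>\<^sub>M G))"
      by (simp add: emeasure_distr)
    also have "\<dots> = (\<integral>\<^sup>+ y. emeasure G (Pair y -` (T -` S \<inter> space (N \<Otimes>\<^sub>M G))) \<partial>N)"
      by (rule G.emeasure_pair_measure_alt) (rule measurable_sets[OF Tm S])
    also have "\<dots> = (\<integral>\<^sup>+ \<omega>. emeasure G (Pair (Y \<omega>) -` (T -` S \<inter> space (N \<Otimes>\<^sub>M G))) \<partial>M)"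
    proof -
      have "(\<lambda>y. emeasure G (Pair y -` (T -` S \<inter> space (N \<Otimes>\<^sub>M G)))) \<in> borel_measurable N"
        by (rule G.measurable_emeasure_Pair) (rule measurable_sets[OF Tm S])
      then have "(\<lambda>y. emeasure G (Pair y -` (T -` S \<inter> space (N \<Otimes>\<^sub>M G)))) \<in> borel_measurable PU"
        unfolding N_def by simp
      then show ?thesis unfolding N_def by (subst nn_integral_distr) auto
    qed
    also have "\<dots> = (\<integral>\<^sup>+ \<omega>. indicator B (Y \<omega>) * emeasure (gauss (L (Y \<omega>)) v) A \<partial>M)"
    proof (intro nn_integral_cong)
      fix \<omega> assume \<omega>: "\<omega> \<in> space M"
      have Ys: "Y \<omega> \<in> space PU" using measurable_space[OF Ym \<omega>] .
      have "Pair (Y \<omega>) -` (T -` S \<inter> space (N \<Otimes>\<^sub>M G)) = (if Y \<omega> \<in> B then {w. w + L (Y \<omega>) \<in> A} else {})"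
      proof -
        have Yz: "\<And>j. j \<notin> J \<Longrightarrow> Y \<omega> j = 0" using Y0[OF \<omega>] .
        have "T (Y \<omega>, w) j0 = w" "ext (T (Y \<omega>, w)) = Y \<omega>" "T (Y \<omega>, w) \<in> space (PB I)" for w
        proof -
          show "T (Y \<omega>, w) j0 = w" by (simp add: T_def I_def)
          show "ext (T (Y \<omega>, w)) = Y \<omega>" using J(2) by (auto simp: T_def ext_def I_def fun_eq_iff Yz)
          show "T (Y \<omega>, w) \<in> space (PB I)" by (simp add: T_def space_PiM)
        qed
        then show ?thesis using Ys unfolding S_def by (auto simp: space_pair_measure N_def G_def)
      qed
      then show "emeasure G (Pair (Y \<omega>) -` (T -` S \<inter> space (N \<Otimes>\<^sub>M G))) = indicator B (Y \<omega>) * emeasure (gauss (L (Y \<omega>)) v) A"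
        using emeasure_gauss_shift[OF v A, of "L (Y \<omega>)"] by (simp add: G_def)
    qed
    also have "\<dots> = (\<integral>\<^sup>+ z. indicator B z * emeasure (gauss (L z) v) A \<partial>N)"
    proof -
      define S2 where "S2 = {p \<in> space (N \<Otimes>\<^sub>M G). snd p + L (fst p) \<in> A \<and> fst p \<in> B}"
      have S2: "S2 \<in> sets (N \<Otimes>\<^sub>M G)" unfolding S2_def N_def G_def by measurable
      have eq: "emeasure G (Pair z -` S2) = indicator B z * emeasure (gauss (L z) v) A" if "z \<in> space PU" for z
      proof -
        have "Pair z -` S2 = (if z \<in> B then {w. w + L z \<in> A} else {})"
          using that unfolding S2_def by (auto simp: space_pair_measure N_def G_def)
        then show ?thesis using emeasure_gauss_shift[OF v A, of "L z"] by (simp add: G_def)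
      qed
      have "(\<lambda>z. emeasure G (Pair z -` S2)) \<in> borel_measurable N"
        by (rule G.measurable_emeasure_Pair[OF S2])
      then have "(\<lambda>z. indicator B z * emeasure (gauss (L z) v) A) \<in> borel_measurable PU"
        unfolding N_def by (simp cong: measurable_cong add: eq[symmetric])
      then show ?thesis unfolding N_def by (subst nn_integral_distr) auto
    qed
    finally show "emeasure M {\<omega> \<in> space M. X \<omega> \<in> A \<and> Y \<omega> \<in> B}
        = (\<integral>\<^sup>+ z. indicator B z * emeasure (gauss (L z) v) A \<partial>distr M PU Y)"
      unfolding N_def .
  qed
qed

lemma mat_solve_exists:
  fixes R :: "'q \<Rightarrow> 'q \<Rightarrow> real"
  assumes fin: "finite D" and inv: "invertible_on D R"
  shows "\<exists>a. (\<forall>y. y \<notin> D \<longrightarrow> a y = 0) \<and> (\<forall>x\<in>D. (\<Sum>y\<in>D. R x y * a y) = v x)"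
proof -
  obtain xs where xs: "set xs = D" "distinct xs" using finite_distinct_list[OF fin] by blast
  define n where "n = length xs"
  define idx where "idx y = (SOME l. l < n \<and> xs ! l = y)" for y
  have idx: "idx (xs ! l) = l" if "l < n" for l
  proof -
    have "\<exists>l'. l' < n \<and> xs ! l' = xs ! l" using that by blast
    then have "idx (xs ! l) < n \<and> xs ! idx (xs ! l) = xs ! l" unfolding idx_def by (rule someI_ex)
    then show ?thesis using nth_eq_iff_index_eq[OF xs(2)] that unfolding n_def by blast
  qed
  have idx2: "idx y < n \<and> xs ! idx y = y" if "y \<in> D" for y
  proof -
    have "\<exists>l'. l' < n \<and> xs ! l' = y" using that xs(1) unfolding n_def by (auto simp: in_set_conv_nth)
    then show ?thesis unfolding idx_def by (rule someI_ex)
  qed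
  have sumD: "(\<Sum>y\<in>D. f y) = (\<Sum>l<n. f (xs ! l))" for f :: "'q \<Rightarrow> real"
    unfolding xs(1)[symmetric] n_def
    by (simp add: sum.distinct_set_conv_list[OF xs(2)] sum_list_sum_nth atLeast0LessThan)
  define A where "A = Matrix.mat n n (\<lambda>(k,l). R (xs ! k) (xs ! l))"
  have A: "A \<in> carrier_mat n n" unfolding A_def by simp
  have Av: "(A *\<^sub>v u) $ k = (\<Sum>l<n. R (xs ! k) (xs ! l) * u $ l)" if "k < n" "u \<in> carrier_vec n" for k u
    using that unfolding A_def by (simp add: scalar_prod_def atLeast0LessThan)
  have "Determinant.det A \<noteq> 0"
  proof
    assume "Determinant.det A = 0"
    then obtain u where u: "u \<in> carrier_vec n" "u \<noteq> 0\<^sub>v n" "A *\<^sub>v u = 0\<^sub>v n"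
      using det_0_iff_vec_prod_zero_field[OF A] by blast
    define a where "a y = (if y \<in> D then u $ idx y else 0)" for y
    have "\<forall>x\<in>D. (\<Sum>y\<in>D. R x y * a y) = 0"
    proof
      fix x assume x: "x \<in> D"
      have "(\<Sum>y\<in>D. R x y * a y) = (\<Sum>l<n. R (xs ! idx x) (xs ! l) * u $ l)"
        unfolding sumD a_def using idx2[OF x] idx xs(1) unfolding n_def by (auto intro!: sum.cong)
      also have "\<dots> = (A *\<^sub>v u) $ idx x" using Av idx2[OF x] u(1) by simp
      finally show "(\<Sum>y\<in>D. R x y * a y) = 0" using u(3) idx2[OF x] by simp
    qed
    then have "\<forall>y\<in>D. a y = 0" using inv unfolding invertible_on_def by blast
    have "u = 0\<^sub>v n"
    proof (rule eq_vecI)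
      fix i assume "i < dim_vec (0\<^sub>v n :: real Matrix.vec)"
      then have i: "i < n" by simp
      then have "xs ! i \<in> D" using xs(1) unfolding n_def by auto
      then have "a (xs ! i) = 0" using \<open>\<forall>y\<in>D. a y = 0\<close> by blast
      then show "u $ i = 0\<^sub>v n $ i" using i idx[OF i] \<open>xs ! i \<in> D\<close> unfolding a_def by simp
    qed (use u(1) in simp)
    then show False using u(2) by simp
  qed
  from det_non_zero_imp_unit[OF A this, of "()"]
  obtain Q where Q: "Q \<in> carrier_mat n n" "A * Q = 1\<^sub>m n"
    unfolding Units_def ring_mat_def by auto
  define b where "b = Matrix.vec n (\<lambda>k. v (xs ! k))"
  define c where "c = Q *\<^sub>v b"
  have c: "c \<in> carrier_vec n" unfolding c_def b_def using Q by simp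
  have Ac: "A *\<^sub>v c = b" unfolding c_def using Q A
    by (simp add: assoc_mult_mat_vec[symmetric, of _ n n _ n] b_def)
  define a where "a y = (if y \<in> D then c $ idx y else 0)" for y
  show ?thesis
  proof (intro exI conjI allI impI ballI)
    fix y assume "y \<notin> D" then show "a y = 0" unfolding a_def by simp
  next
    fix x assume x: "x \<in> D"
    have "(\<Sum>y\<in>D. R x y * a y) = (\<Sum>l<n. R (xs ! idx x) (xs ! l) * c $ l)"
      unfolding sumD a_def using idx2[OF x] idx xs(1) unfolding n_def by (auto intro!: sum.cong)
    also have "\<dots> = (A *\<^sub>v c) $ idx x" using Av idx2[OF x] c by simp
    also have "\<dots> = v x" using Ac idx2[OF x] unfolding b_def by simp
    finally show "(\<Sum>y\<in>D. R x y * a y) = v x" .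
  qed
qed

lemma mat_solve_spec:
  assumes fin: "finite D" and inv: "invertible_on D R"
  shows "(\<forall>y. y \<notin> D \<longrightarrow> mat_solve D R v y = 0) \<and> (\<forall>x\<in>D. (\<Sum>y\<in>D. R x y * mat_solve D R v y) = v x)"
proof -
  have "\<exists>!a. (\<forall>y. y \<notin> D \<longrightarrow> a y = 0) \<and> (\<forall>x\<in>D. (\<Sum>y\<in>D. R x y * a y) = v x)"
  proof (rule ex_ex1I)
    show "\<exists>a. (\<forall>y. y \<notin> D \<longrightarrow> a y = 0) \<and> (\<forall>x\<in>D. (\<Sum>y\<in>D. R x y * a y) = v x)"
      by (rule mat_solve_exists[OF fin inv])
    fix a b
    assume a: "(\<forall>y. y \<notin> D \<longrightarrow> a y = 0) \<and> (\<forall>x\<in>D. (\<Sum>y\<in>D. R x y * a y) = v x)"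
       and b: "(\<forall>y. y \<notin> D \<longrightarrow> b y = 0) \<and> (\<forall>x\<in>D. (\<Sum>y\<in>D. R x y * b y) = v x)"
    have "\<forall>x\<in>D. (\<Sum>y\<in>D. R x y * (a y - b y)) = 0"
      using a b by (simp add: right_diff_distrib sum_subtractf)
    then have "\<forall>y\<in>D. a y - b y = 0" using spec[OF inv[unfolded invertible_on_def], of "\<lambda>y. a y - b y"] by simp
    then show "a = b" using a b by (auto simp: fun_eq_iff)
  qed
  then show ?thesis unfolding mat_solve_def by (rule theI')
qed

lemma mat_solve_out: "finite D \<Longrightarrow> invertible_on D R \<Longrightarrow> y \<notin> D \<Longrightarrow> mat_solve D R v y = 0"
  using mat_solve_spec by blast

lemma mat_solve_eq: "finite D \<Longrightarrow> invertible_on D R \<Longrightarrow> x \<in> D \<Longrightarrow> (\<Sum>y\<in>D. R x y * mat_solve D R v y) = v x"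
  using mat_solve_spec by blast

lemma krig_sym:
  assumes fin: "finite D" and inv: "invertible_on D R" and sym: "\<And>x y. R x y = R y x"
  shows "krig D R u v = (\<Sum>y\<in>D. mat_solve D R u y * v y)"
proof -
  let ?a = "mat_solve D R u" and ?b = "mat_solve D R v"
  have "krig D R u v = (\<Sum>y\<in>D. (\<Sum>x\<in>D. R y x * ?a x) * ?b y)"
    unfolding krig_def by (intro sum.cong refl) (simp add: mat_solve_eq[OF fin inv])
  also have "\<dots> = (\<Sum>x\<in>D. ?a x * (\<Sum>y\<in>D. R x y * ?b y))"
  proof -
    have "(\<Sum>y\<in>D. (\<Sum>x\<in>D. R y x * ?a x) * ?b y) = (\<Sum>y\<in>D. \<Sum>x\<in>D. R y x * ?a x * ?b y)"
      by (simp add: sum_distrib_right)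
    also have "\<dots> = (\<Sum>x\<in>D. \<Sum>y\<in>D. R y x * ?a x * ?b y)" by (rule sum.swap)
    also have "\<dots> = (\<Sum>x\<in>D. ?a x * (\<Sum>y\<in>D. R x y * ?b y))"
      by (simp add: sum_distrib_left sym mult_ac)
    finally show ?thesis .
  qed
  also have "\<dots> = (\<Sum>x\<in>D. ?a x * v x)"
    by (intro sum.cong refl) (simp add: mat_solve_eq[OF fin inv])
  finally show ?thesis .
qed

lemma base_law:
  fixes M :: "'a measure" and P :: "nat \<Rightarrow> 'a \<Rightarrow> 'q \<Rightarrow> real"
    and a :: "nat \<Rightarrow> 'q \<Rightarrow> real" and mu :: "nat \<Rightarrow> 'q \<Rightarrow> real" and K :: "nat \<Rightarrow> 'q \<Rightarrow> 'q \<Rightarrow> real"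
  assumes PS: "prob_space M" and finS: "finite S" and finF: "finite F"
    and ind: "prob_space.indep_vars M (\<lambda>_. PiM UNIV (\<lambda>_. borel)) P S"
    and gp: "\<And>u. u \<in> S \<Longrightarrow> gaussian_process M (P u) (mu u) (K u)"
    and psd: "\<And>u c. u \<in> S \<Longrightarrow> 0 \<le> (\<Sum>y\<in>F. \<Sum>y'\<in>F. c y * c y' * K u y y')"
  shows "distr M borel (\<lambda>\<omega>. a0 + (\<Sum>u\<in>S. \<Sum>y\<in>F. a u y * P u \<omega> y))
    = gauss (a0 + (\<Sum>u\<in>S. \<Sum>y\<in>F. a u y * mu u y)) (\<Sum>u\<in>S. \<Sum>y\<in>F. \<Sum>y'\<in>F. a u y * a u y' * K u y y')"
proof -
  interpret prob_space M by (rule PS)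
  define G where "G u \<omega> = (\<Sum>y\<in>F. a u y * P u \<omega> y)" for u \<omega>
  define h where "h u f = (\<Sum>y\<in>F. a u y * f y)" for u and f :: "'q \<Rightarrow> real"
  have hm: "h u \<in> borel_measurable (PiM UNIV (\<lambda>_. borel))" for u
    unfolding h_def by measurable
  have indG: "indep_vars (\<lambda>_. borel) G S"
    using indep_vars_compose2[OF ind, of h "\<lambda>_. borel"] hm unfolding G_def h_def by simp
  have Pm: "(\<lambda>\<omega>. P u \<omega> y) \<in> borel_measurable M" if "u \<in> S" for u y
    using gp[OF that] unfolding gaussian_process_def by blast
  have Gm[measurable]: "G u \<in> borel_measurable M" if "u \<in> S" for u
    unfolding G_def using Pm[OF that] by measurable
  have dG: "distr M borel (G u) = gauss (\<Sum>y\<in>F. a u y * mu u y) (\<Sum>y\<in>F. \<Sum>y'\<in>F. a u y * a u y' * K u y y')"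
    if "u \<in> S" for u
    using gp[OF that] finF unfolding gaussian_process_def G_def by blast
  have Sm: "(\<lambda>\<omega>. a0 + (\<Sum>u\<in>S. G u \<omega>)) \<in> borel_measurable M"
    using Gm by measurable
  have v0: "0 \<le> (\<Sum>u\<in>S. \<Sum>y\<in>F. \<Sum>y'\<in>F. a u y * a u y' * K u y y')"
    by (rule sum_nonneg) (rule psd)
  have "distr M borel (\<lambda>\<omega>. a0 + (\<Sum>u\<in>S. G u \<omega>))
    = gauss (a0 + (\<Sum>u\<in>S. \<Sum>y\<in>F. a u y * mu u y)) (\<Sum>u\<in>S. \<Sum>y\<in>F. \<Sum>y'\<in>F. a u y * a u y' * K u y y')"
  proof (rule gauss_eqI[OF _ v0])
    show "real_distribution (distr M borel (\<lambda>\<omega>. a0 + (\<Sum>u\<in>S. G u \<omega>)))" using Sm by simp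
    fix t
    have "char (distr M borel (\<lambda>\<omega>. a0 + (\<Sum>u\<in>S. G u \<omega>))) t = (CLINT \<omega>|M. iexp (t * a0) * iexp (t * (\<Sum>u\<in>S. G u \<omega>)))"
      unfolding char_def using Sm
      by (subst integral_distr) (auto intro!: Bochner_Integration.integral_cong simp: algebra_simps simp flip: exp_add)
    also have "\<dots> = iexp (t * a0) * char (distr M borel (\<lambda>\<omega>. \<Sum>u\<in>S. G u \<omega>)) t"
      unfolding char_def using Gm by (subst integral_distr) auto
    also have "\<dots> = iexp (t * a0) * (\<Prod>u\<in>S. char (distr M borel (G u)) t)"
      using char_distr_sum[OF indG] by simp
    also have "\<dots> = iexp (t * a0) * (\<Prod>u\<in>S. exp (\<i> * complex_of_real (t * (\<Sum>y\<in>F. a u y * mu u y))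
          - complex_of_real (t\<^sup>2 * (\<Sum>y\<in>F. \<Sum>y'\<in>F. a u y * a u y' * K u y y') / 2)))"
      using psd by (intro arg_cong2[where f="(*)"] refl prod.cong) (auto simp: dG char_gauss)
    also have "\<dots> = exp (\<i> * complex_of_real (t * a0) + (\<Sum>u\<in>S. \<i> * complex_of_real (t * (\<Sum>y\<in>F. a u y * mu u y))
          - complex_of_real (t\<^sup>2 * (\<Sum>y\<in>F. \<Sum>y'\<in>F. a u y * a u y' * K u y y') / 2)))"
      using finS by (simp add: exp_sum exp_add)
    also have "\<dots> = exp (\<i> * complex_of_real (t * (a0 + (\<Sum>u\<in>S. \<Sum>y\<in>F. a u y * mu u y)))
        - complex_of_real (t\<^sup>2 * (\<Sum>u\<in>S. \<Sum>y\<in>F. \<Sum>y'\<in>F. a u y * a u y' * K u y y') / 2))"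
    proof (rule arg_cong[where f=exp])
      have "(\<Sum>u\<in>S. \<i> * complex_of_real (t * (\<Sum>y\<in>F. a u y * mu u y))
          - complex_of_real (t\<^sup>2 * (\<Sum>y\<in>F. \<Sum>y'\<in>F. a u y * a u y' * K u y y') / 2))
        = \<i> * complex_of_real (t * (\<Sum>u\<in>S. \<Sum>y\<in>F. a u y * mu u y))
          - complex_of_real (t\<^sup>2 * (\<Sum>u\<in>S. \<Sum>y\<in>F. \<Sum>y'\<in>F. a u y * a u y' * K u y y') / 2)"
        by (simp only: sum_subtractf sum_distrib_left sum_divide_distrib of_real_sum[symmetric]) (simp add: sum_distrib_left of_real_sum)
      then show "\<i> * complex_of_real (t * a0) + (\<Sum>u\<in>S. \<i> * complex_of_real (t * (\<Sum>y\<in>F. a u y * mu u y))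
          - complex_of_real (t\<^sup>2 * (\<Sum>y\<in>F. \<Sum>y'\<in>F. a u y * a u y' * K u y y') / 2))
        = \<i> * complex_of_real (t * (a0 + (\<Sum>u\<in>S. \<Sum>y\<in>F. a u y * mu u y)))
        - complex_of_real (t\<^sup>2 * (\<Sum>u\<in>S. \<Sum>y\<in>F. \<Sum>y'\<in>F. a u y * a u y' * K u y y') / 2)"
        by (simp add: algebra_simps)
    qed
    finally show "char (distr M borel (\<lambda>\<omega>. a0 + (\<Sum>u\<in>S. G u \<omega>))) t = exp (\<i> * complex_of_real (t * (a0 + (\<Sum>u\<in>S. \<Sum>y\<in>F. a u y * mu u y)))
        - complex_of_real (t\<^sup>2 * (\<Sum>u\<in>S. \<Sum>y\<in>F. \<Sum>y'\<in>F. a u y * a u y' * K u y y') / 2))" .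
  qed
  then show ?thesis unfolding G_def .
qed

definition pr :: "(nat \<Rightarrow> 'q \<Rightarrow> real) \<Rightarrow> nat \<Rightarrow> nat \<Rightarrow> 'q \<Rightarrow> real" where
  "pr rho u t y = (\<Prod>w\<in>{u..<t}. rho w y)"

lemma pr_same[simp]: "pr rho t t y = 1" by (simp add: pr_def)

lemma pr_Suc: "u \<le> t \<Longrightarrow> pr rho u (Suc t) y = rho t y * pr rho u t y"
  by (simp add: pr_def prod.atLeastLessThan_Suc mult.commute)

locale cok =
  fixes M :: "'a measure" and s :: nat
    and m rho :: "nat \<Rightarrow> 'q \<Rightarrow> real"
    and sigma2 :: "nat \<Rightarrow> real" and r :: "nat \<Rightarrow> 'q \<Rightarrow> 'q \<Rightarrow> real"
    and D :: "nat \<Rightarrow> 'q set" and Z delta :: "nat \<Rightarrow> 'a \<Rightarrow> 'q \<Rightarrow> real"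
  assumes PS: "prob_space M"
    and s2: "s \<ge> 2"
    and sig: "\<forall>t\<in>{1..s}. sigma2 t > 0"
    and ker: "\<forall>t\<in>{1..s}. correlation_kernel (r t)"
    and finD: "\<forall>t\<in>{1..s}. finite (D t)"
    and nest: "\<forall>t\<in>{1..<s}. D (Suc t) \<subseteq> D t"
    and inv: "\<forall>t\<in>{1..s}. invertible_on (D t) (r t)"
    and gp1: "gaussian_process M (Z 1) (m 1) (\<lambda>x y. sigma2 1 * r 1 x y)"
    and gpd: "\<forall>t\<in>{2..s}. gaussian_process M (delta t) (m t) (\<lambda>x y. sigma2 t * r t x y)"
    and ind: "prob_space.indep_vars M (\<lambda>_. Pi\<^sub>M UNIV (\<lambda>_. borel)) (\<lambda>t. if t = 1 then Z 1 else delta t) {1..s}"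
    and rec: "\<forall>t\<in>{2..s}. \<forall>\<omega>\<in>space M. \<forall>x. Z t \<omega> x = rho (t - 1) x * Z (t - 1) \<omega> x + delta t \<omega> x"
begin

definition "P u = (if u = 1 then Z 1 else delta u)"

lemma P1: "P 1 = Z 1" by (simp add: P_def)
lemma PSuc: "P (Suc (Suc k)) = delta (Suc (Suc k))" by (simp add: P_def)

lemma gpP: "u \<in> {1..s} \<Longrightarrow> gaussian_process M (P u) (m u) (\<lambda>x y. sigma2 u * r u x y)"
  using gp1 gpd by (cases "u = 1") (auto simp: P_def)

lemma Pm[measurable]: "u \<in> {1..s} \<Longrightarrow> (\<lambda>\<omega>. P u \<omega> y) \<in> borel_measurable M"
  using gpP unfolding gaussian_process_def by blast

lemma sym_r: "u \<in> {1..s} \<Longrightarrow> r u a b = r u b a"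
  using ker unfolding correlation_kernel_def by blast

lemma diag_r: "u \<in> {1..s} \<Longrightarrow> r u a a = 1"
  using ker unfolding correlation_kernel_def by blast

lemma nest':
  assumes "1 \<le> u" "u \<le> v" "v \<le> s" shows "D v \<subseteq> D u"
  using assms(2,3)
proof (induction v rule: dec_induct)
  case base then show ?case by simp
next
  case (step n)
  then have "D (Suc n) \<subseteq> D n" using nest assms(1) by auto
  then show ?case using step by auto
qed

lemma Z_rep:
  assumes "1 \<le> t" "t \<le> s" "\<omega> \<in> space M"
  shows "Z t \<omega> y = (\<Sum>u\<in>{1..t}. pr rho u t y * P u \<omega> y)"
  using assms(1,2)
proof (induction t rule: dec_induct)
  case base then show ?case by (simp add: P_def)
next
  case (step n)
  have "Z (Suc n) \<omega> y = rho n y * Z n \<omega> y + delta (Suc n) \<omega> y"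
    using rec step assms(3) by force
  also have "delta (Suc n) \<omega> y = P (Suc n) \<omega> y" using step by (simp add: P_def)
  also have "Z n \<omega> y = (\<Sum>u\<in>{1..n}. pr rho u n y * P u \<omega> y)" using step by simp
  also have "rho n y * (\<Sum>u\<in>{1..n}. pr rho u n y * P u \<omega> y) = (\<Sum>u\<in>{1..n}. pr rho u (Suc n) y * P u \<omega> y)"
    by (simp add: sum_distrib_left pr_Suc mult.assoc)
  finally show ?case by (simp add: sum.cl_ivl_Suc)
qed

lemma Zm[measurable]:
  assumes "1 \<le> t" "t \<le> s" shows "(\<lambda>\<omega>. Z t \<omega> y) \<in> borel_measurable M"
proof -
  have "(\<lambda>\<omega>. \<Sum>u\<in>{1..t}. pr rho u t y * P u \<omega> y) \<in> borel_measurable M"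
    using assms by (intro borel_measurable_sum borel_measurable_times) auto
  then show ?thesis by (rule measurable_cong[THEN iffD1, rotated]) (simp add: Z_rep[OF assms])
qed

definition "w x u = mat_solve (D u) (r u) (r u x)"

definition "eta x u \<omega> = P u \<omega> x - m u x - (\<Sum>y\<in>D u. w x u y * (P u \<omega> y - m u y))"

lemma krig_w: "u \<in> {1..s} \<Longrightarrow> krig (D u) (r u) (r u x) v = (\<Sum>y\<in>D u. w x u y * v y)"
  unfolding w_def using finD inv by (intro krig_sym) (auto intro: sym_r)

lemma resid_rep:
  assumes "1 \<le> t" "t \<le> T" "T \<le> s" "\<omega> \<in> space M"
  shows "Z t \<omega> x - cok_mean m rho r D t x (obs_data Z D T \<omega>) = (\<Sum>u\<in>{1..t}. pr rho u t x * eta x u \<omega>)"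
  using assms(1)
proof (induction t rule: dec_induct)
  case base
  have "krig (D 1) (r 1) (r 1 x) (\<lambda>y. obs_data Z D T \<omega> (1, y) - m 1 y) = (\<Sum>y\<in>D 1. w x 1 y * (P 1 \<omega> y - m 1 y))"
    using assms s2 by (subst krig_w) (auto simp: obs_data_def P_def intro!: sum.cong)
  then show ?case by (simp add: eta_def P_def)
next
  case (step n)
  then obtain k where n: "n = Suc k" by (cases n) auto
  have nT: "Suc n \<le> T" "Suc n \<le> s" using step assms by auto
  let ?z = "obs_data Z D T \<omega>"
  have kr: "krig (D (Suc n)) (r (Suc n)) (r (Suc n) x) (\<lambda>y. ?z (Suc n, y) - rho n y * ?z (n, y) - m (Suc n) y)
      = (\<Sum>y\<in>D (Suc n). w x (Suc n) y * (P (Suc n) \<omega> y - m (Suc n) y))"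
  proof -
    have "y \<in> D n" if "y \<in> D (Suc n)" for y using nest' [of n "Suc n"] step nT that by auto
    moreover have "Z (Suc n) \<omega> y = rho n y * Z n \<omega> y + delta (Suc n) \<omega> y" for y
      using rec nT assms(4) step by force
    ultimately show ?thesis using nT step
      by (subst krig_w) (auto simp: obs_data_def P_def intro!: sum.cong)
  qed
  have Zx: "Z (Suc n) \<omega> x = rho n x * Z n \<omega> x + P (Suc n) \<omega> x"
    using rec nT assms(4) step by (force simp: P_def)
  have "Z (Suc n) \<omega> x - cok_mean m rho r D (Suc n) x ?z
      = rho n x * (Z n \<omega> x - cok_mean m rho r D n x ?z) + eta x (Suc n) \<omega>"
    unfolding Zx using kr by (simp add: n eta_def algebra_simps)
  also have "\<dots> = (\<Sum>u\<in>{1..Suc n}. pr rho u (Suc n) x * eta x u \<omega>)"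
    using step by (simp add: sum.cl_ivl_Suc sum_distrib_left pr_Suc mult.assoc)
  finally show ?case .
qed

lemma var_rep:
  assumes "1 \<le> t" "t \<le> s"
  shows "cok_var sigma2 rho r D t x = (\<Sum>u\<in>{1..t}. (pr rho u t x)\<^sup>2 * (sigma2 u * (1 - krig (D u) (r u) (r u x) (r u x))))"
  using assms(1)
proof (induction t rule: dec_induct)
  case base then show ?case by simp
next
  case (step n)
  then obtain k where n: "n = Suc k" by (cases n) auto
  have "cok_var sigma2 rho r D (Suc n) x = (rho n x)\<^sup>2 * cok_var sigma2 rho r D n x
      + sigma2 (Suc n) * (1 - krig (D (Suc n)) (r (Suc n)) (r (Suc n) x) (r (Suc n) x))"
    by (simp add: n)
  also have "\<dots> = (\<Sum>u\<in>{1..Suc n}. (pr rho u (Suc n) x)\<^sup>2 * (sigma2 u * (1 - krig (D u) (r u) (r u x) (r u x))))"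
    using step by (simp add: sum.cl_ivl_Suc sum_distrib_left pr_Suc power_mult_distrib mult.assoc)
  finally show ?case .
qed

definition "FF x = insert x (\<Union>u\<in>{1..s}. D u)"
definition "KK u y y' = sigma2 u * r u y y'"
definition "Bil x a b = (\<Sum>u\<in>{1..s}. \<Sum>y\<in>FF x. \<Sum>y'\<in>FF x. a u y * b u y' * KK u y y')"
definition "Mn x a = (\<Sum>u\<in>{1..s}. \<Sum>y\<in>FF x. a u y * m u y)"
definition "val x a \<omega> = (\<Sum>u\<in>{1..s}. \<Sum>y\<in>FF x. a u y * P u \<omega> y)"
definition "zc t y = (\<lambda>u y'. if u \<in> {1..t} \<and> y' = y then pr rho u t y else 0)"
definition "ec x t = (\<lambda>u y'. if u \<in> {1..t} then pr rho u t x * ((if y' = x then 1 else 0) - w x u y') else 0)"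

lemma finFF: "finite (FF x)" unfolding FF_def using finD by auto
lemma DFF: "u \<in> {1..s} \<Longrightarrow> D u \<subseteq> FF x" unfolding FF_def by auto
lemma xFF: "x \<in> FF x" unfolding FF_def by auto

lemma w_out: "u \<in> {1..s} \<Longrightarrow> y \<notin> D u \<Longrightarrow> w x u y = 0"
  unfolding w_def using finD inv by (intro mat_solve_out) auto

lemma w_eq: "u \<in> {1..s} \<Longrightarrow> y \<in> D u \<Longrightarrow> (\<Sum>y'\<in>D u. r u y y' * w x u y') = r u x y"
  unfolding w_def using finD inv by (subst mat_solve_eq) auto

lemma sum_FF_w: "u \<in> {1..s} \<Longrightarrow> (\<Sum>y\<in>FF x. w x u y * f y) = (\<Sum>y\<in>D u. w x u y * f y)"
  using finFF DFF w_out by (intro sum.mono_neutral_right) auto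

lemma val_zc:
  assumes "t \<le> s" "y \<in> FF x"
  shows "val x (zc t y) \<omega> = (\<Sum>u\<in>{1..t}. pr rho u t y * P u \<omega> y)"
proof -
  have "val x (zc t y) \<omega> = (\<Sum>u\<in>{1..s}. if u \<in> {1..t} then pr rho u t y * P u \<omega> y else 0)"
    unfolding val_def zc_def using assms finFF by (intro sum.cong refl) (auto simp: if_distrib[where f="\<lambda>a. a * _"] sum.delta cong: if_cong)
  also have "\<dots> = (\<Sum>u\<in>{1..t}. pr rho u t y * P u \<omega> y)"
    by (rule sum.mono_neutral_cong_right) (use assms in auto)
  finally show ?thesis .
qed

definition "eps x u y = (if y = x then 1 else 0) - w x u y"

lemma ec_eps: "ec x t u y = (if u \<in> {1..t} then pr rho u t x * eps x u y else 0)"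
  unfolding ec_def eps_def by simp

lemma sum_eps: "u \<in> {1..s} \<Longrightarrow> (\<Sum>y\<in>FF x. eps x u y * f y) = f x - (\<Sum>y\<in>D u. w x u y * f y)"
  unfolding eps_def using finFF xFF by (simp add: left_diff_distrib sum_subtractf sum_FF_w if_distrib[where f="\<lambda>a. a * _"] sum.delta cong: if_cong)

lemma kr: "u \<in> {1..s} \<Longrightarrow> y \<in> D u \<Longrightarrow> (\<Sum>y1\<in>FF x. eps x u y1 * r u y1 y) = 0"
proof -
  assume u: "u \<in> {1..s}" and y: "y \<in> D u"
  have "(\<Sum>y1\<in>FF x. eps x u y1 * r u y1 y) = r u x y - (\<Sum>y1\<in>D u. w x u y1 * r u y1 y)"
    by (rule sum_eps[OF u])
  also have "(\<Sum>y1\<in>D u. w x u y1 * r u y1 y) = (\<Sum>y1\<in>D u. r u y y1 * w x u y1)"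
    using u by (intro sum.cong refl) (simp add: sym_r[OF u, of y] mult.commute)
  also have "\<dots> = r u x y" by (rule w_eq[OF u y])
  finally show ?thesis by simp
qed

lemma val_ec:
  assumes "t \<le> s"
  shows "val x (ec x t) \<omega> - Mn x (ec x t) = (\<Sum>u\<in>{1..t}. pr rho u t x * eta x u \<omega>)"
proof -
  have "val x (ec x t) \<omega> - Mn x (ec x t) = (\<Sum>u\<in>{1..s}. \<Sum>y\<in>FF x. ec x t u y * (P u \<omega> y - m u y))"
    unfolding val_def Mn_def by (simp add: sum_subtractf right_diff_distrib)
  also have "\<dots> = (\<Sum>u\<in>{1..s}. if u \<in> {1..t} then pr rho u t x * eta x u \<omega> else 0)"
  proof (intro sum.cong refl)
    fix u assume u: "u \<in> {1..s}"
    show "(\<Sum>y\<in>FF x. ec x t u y * (P u \<omega> y - m u y)) = (if u \<in> {1..t} then pr rho u t x * eta x u \<omega> else 0)"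
    proof (cases "u \<in> {1..t}")
      case True
      have "(\<Sum>y\<in>FF x. ec x t u y * (P u \<omega> y - m u y)) = pr rho u t x * (\<Sum>y\<in>FF x. eps x u y * (P u \<omega> y - m u y))"
        using True by (simp add: ec_eps sum_distrib_left mult.assoc)
      also have "\<dots> = pr rho u t x * eta x u \<omega>" by (simp add: sum_eps[OF u] eta_def)
      finally show ?thesis using True by simp
    next
      case False
      then have "\<And>y. ec x t u y = 0" unfolding ec_def by auto
      then show ?thesis using False by auto
    qed
  qed
  also have "\<dots> = (\<Sum>u\<in>{1..t}. pr rho u t x * eta x u \<omega>)"
    by (rule sum.mono_neutral_cong_right) (use assms in auto)
  finally show ?thesis .
qed

lemma Bil_ec_zc:
  assumes "1 \<le> t'" "t' \<le> t" "t \<le> s" "y \<in> D t'"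
  shows "Bil x (ec x t) (zc t' y) = 0"
  unfolding Bil_def
proof (rule sum.neutral, rule ballI)
  fix u assume u: "u \<in> {1..s}"
  have yF: "y \<in> FF x" using DFF[of t' x] assms by auto
  show "(\<Sum>y1\<in>FF x. \<Sum>y2\<in>FF x. ec x t u y1 * zc t' y u y2 * KK u y1 y2) = 0"
  proof (cases "u \<in> {1..t'}")
    case True
    have yD: "y \<in> D u" using nest'[of u t'] True assms by auto
    have "(\<Sum>y1\<in>FF x. \<Sum>y2\<in>FF x. ec x t u y1 * zc t' y u y2 * KK u y1 y2)
        = (\<Sum>y1\<in>FF x. ec x t u y1 * pr rho u t' y * KK u y1 y)"
      using True yF finFF by (intro sum.cong refl) (simp add: zc_def if_distrib[where f="\<lambda>a. _ * a"] if_distrib[where f="\<lambda>a. a * _"] sum.delta cong: if_cong)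
    also have "\<dots> = pr rho u t x * pr rho u t' y * sigma2 u * (\<Sum>y1\<in>FF x. eps x u y1 * r u y1 y)"
      using True assms by (simp add: ec_eps KK_def sum_distrib_left mult_ac)
    also have "\<dots> = 0" by (simp add: kr[OF u yD])
    finally show ?thesis .
  next
    case False
    then have "\<And>y2. zc t' y u y2 = 0" unfolding zc_def by auto
    then show ?thesis by simp
  qed
qed

lemma quad:
  assumes u: "u \<in> {1..s}"
  shows "(\<Sum>y1\<in>FF x. \<Sum>y2\<in>FF x. eps x u y1 * eps x u y2 * r u y1 y2) = 1 - krig (D u) (r u) (r u x) (r u x)"
proof -
  define g where "g y2 = (\<Sum>y1\<in>FF x. eps x u y1 * r u y1 y2)" for y2
  have "(\<Sum>y1\<in>FF x. \<Sum>y2\<in>FF x. eps x u y1 * eps x u y2 * r u y1 y2) = (\<Sum>y2\<in>FF x. \<Sum>y1\<in>FF x. eps x u y1 * eps x u y2 * r u y1 y2)"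
    by (rule sum.swap)
  also have "\<dots> = (\<Sum>y2\<in>FF x. eps x u y2 * g y2)"
    unfolding g_def by (simp add: sum_distrib_left mult_ac)
  also have "\<dots> = g x - (\<Sum>y2\<in>D u. w x u y2 * g y2)" by (rule sum_eps[OF u])
  also have "(\<Sum>y2\<in>D u. w x u y2 * g y2) = 0"
    unfolding g_def using kr[OF u] by (intro sum.neutral) auto
  also have "g x = 1 - (\<Sum>y1\<in>D u. w x u y1 * r u y1 x)"
    unfolding g_def by (simp add: sum_eps[OF u] diag_r[OF u])
  also have "(\<Sum>y1\<in>D u. w x u y1 * r u y1 x) = krig (D u) (r u) (r u x) (r u x)"
    unfolding krig_def w_def by (intro sum.cong refl) (simp add: sym_r[OF u] mult.commute)
  finally show ?thesis by simp
qed

lemma Bil_ec_ec: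
  assumes "1 \<le> t" "t \<le> s"
  shows "Bil x (ec x t) (ec x t) = cok_var sigma2 rho r D t x"
proof -
  have "Bil x (ec x t) (ec x t) = (\<Sum>u\<in>{1..s}. if u \<in> {1..t} then (pr rho u t x)\<^sup>2 * (sigma2 u * (1 - krig (D u) (r u) (r u x) (r u x))) else 0)"
    unfolding Bil_def
  proof (rule sum.cong[OF refl])
    fix u assume u: "u \<in> {1..s}"
    show "(\<Sum>y\<in>FF x. \<Sum>y'\<in>FF x. ec x t u y * ec x t u y' * KK u y y') = (if u \<in> {1..t} then (pr rho u t x)\<^sup>2 * (sigma2 u * (1 - krig (D u) (r u) (r u x) (r u x))) else 0)"
    proof (cases "u \<in> {1..t}")
      case True
      have "(\<Sum>y\<in>FF x. \<Sum>y'\<in>FF x. ec x t u y * ec x t u y' * KK u y y')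
          = (pr rho u t x)\<^sup>2 * sigma2 u * (\<Sum>y1\<in>FF x. \<Sum>y2\<in>FF x. eps x u y1 * eps x u y2 * r u y1 y2)"
        using True by (simp add: ec_eps KK_def sum_distrib_left power2_eq_square mult_ac)
      then show ?thesis using True by (simp add: quad[OF u])
    next
      case False
      then have "\<And>y. ec x t u y = 0" unfolding ec_def by auto
      then show ?thesis using False by auto
    qed
  qed
  also have "\<dots> = (\<Sum>u\<in>{1..t}. (pr rho u t x)\<^sup>2 * (sigma2 u * (1 - krig (D u) (r u) (r u x) (r u x))))"
    by (rule sum.mono_neutral_cong_right) (use assms in auto)
  also have "\<dots> = cok_var sigma2 rho r D t x" by (rule var_rep[OF assms, symmetric])
  finally show ?thesis .
qed

lemma Bil_psd: "0 \<le> Bil x a a"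
  unfolding Bil_def
proof (rule sum_nonneg)
  fix u assume u: "u \<in> {1..s}"
  have "(\<Sum>y\<in>FF x. \<Sum>y'\<in>FF x. a u y * a u y' * KK u y y') = sigma2 u * (\<Sum>y\<in>FF x. \<Sum>y'\<in>FF x. a u y * a u y' * r u y y')"
    by (simp add: KK_def sum_distrib_left mult_ac)
  also have "\<dots> \<ge> 0"
  proof (rule mult_nonneg_nonneg)
    show "0 \<le> sigma2 u" using sig u by (simp add: less_imp_le)
    show "0 \<le> (\<Sum>y\<in>FF x. \<Sum>y'\<in>FF x. a u y * a u y' * r u y y')"
      using ker u finFF unfolding correlation_kernel_def by blast
  qed
  finally show "0 \<le> (\<Sum>y\<in>FF x. \<Sum>y'\<in>FF x. a u y * a u y' * KK u y y')" .
qed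

lemma KK_sym: "u \<in> {1..s} \<Longrightarrow> KK u y y' = KK u y' y"
  unfolding KK_def using sym_r by simp

lemma Bil_sym: "Bil x a b = Bil x b a"
  unfolding Bil_def
proof (rule sum.cong[OF refl])
  fix u assume u: "u \<in> {1..s}"
  have "(\<Sum>y\<in>FF x. \<Sum>y'\<in>FF x. a u y * b u y' * KK u y y') = (\<Sum>y'\<in>FF x. \<Sum>y\<in>FF x. a u y * b u y' * KK u y y')"
    by (rule sum.swap)
  also have "\<dots> = (\<Sum>y'\<in>FF x. \<Sum>y\<in>FF x. b u y' * a u y * KK u y' y)"
    using KK_sym[OF u] by (simp add: mult_ac)
  finally show "(\<Sum>y\<in>FF x. \<Sum>y'\<in>FF x. a u y * b u y' * KK u y y') = (\<Sum>y\<in>FF x. \<Sum>y'\<in>FF x. b u y * a u y' * KK u y y')" .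
qed

lemma Bil_expand:
  "Bil x (\<lambda>u y. \<alpha> * a u y + b u y) (\<lambda>u y. \<alpha> * a u y + b u y) = \<alpha>\<^sup>2 * Bil x a a + 2 * \<alpha> * Bil x a b + Bil x b b"
proof -
  have "Bil x (\<lambda>u y. \<alpha> * a u y + b u y) (\<lambda>u y. \<alpha> * a u y + b u y) = \<alpha>\<^sup>2 * Bil x a a + \<alpha> * Bil x a b + \<alpha> * Bil x b a + Bil x b b"
    unfolding Bil_def by (simp add: algebra_simps sum.distrib sum_distrib_left power2_eq_square)
  then show ?thesis using Bil_sym[of x b a] by simp
qed

lemma Bil_sum_right:
  "Bil x a (\<lambda>u y. \<Sum>j\<in>J. c j * g j u y) = (\<Sum>j\<in>J. c j * Bil x a (g j))"
  unfolding Bil_def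
  by (simp add: sum_distrib_left sum_distrib_right mult_ac sum.swap[of _ J])

lemma Mn_lin: "Mn x (\<lambda>u y. \<alpha> * a u y + b u y) = \<alpha> * Mn x a + Mn x b"
  unfolding Mn_def by (simp add: algebra_simps sum.distrib sum_distrib_left)

lemma Mn_sum: "Mn x (\<lambda>u y. \<Sum>j\<in>J. c j * g j u y) = (\<Sum>j\<in>J. c j * Mn x (g j))"
  unfolding Mn_def by (simp add: sum_distrib_left sum_distrib_right mult_ac sum.swap[of _ J])

lemma val_lin: "val x (\<lambda>u y. \<alpha> * a u y + b u y) \<omega> = \<alpha> * val x a \<omega> + val x b \<omega>"
  unfolding val_def by (simp add: algebra_simps sum.distrib sum_distrib_left)

lemma val_sum: "val x (\<lambda>u y. \<Sum>j\<in>J. c j * g j u y) \<omega> = (\<Sum>j\<in>J. c j * val x (g j) \<omega>)"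
  unfolding val_def by (simp add: sum_distrib_left sum_distrib_right mult_ac sum.swap[of _ J])

lemma cm_meas:
  "t \<le> s \<Longrightarrow> (\<lambda>z. cok_mean m rho r D t x z) \<in> borel_measurable (PU :: (nat \<times> 'q \<Rightarrow> real) measure)"
proof (induction t rule: less_induct)
  case (less t)
  consider "t = 0" | "t = Suc 0" | k where "t = Suc (Suc k)"
    by (metis not0_implies_Suc)
  then show ?case
  proof cases
    case 1 then show ?thesis by simp
  next
    case 2
    have eq: "cok_mean m rho r D t x z = m 1 x + (\<Sum>y\<in>D 1. w x 1 y * (z (1, y) - m 1 y))" for z
      using 2 less s2 by (simp add: krig_w)
    show ?thesis unfolding eq by measurable
  next
    case 3
    have IH: "(\<lambda>z. cok_mean m rho r D (Suc k) x z) \<in> borel_measurable (PU :: (nat \<times> 'q \<Rightarrow> real) measure)"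
      using less 3 by simp
    have eq: "cok_mean m rho r D t x z = rho (Suc k) x * cok_mean m rho r D (Suc k) x z + m (Suc (Suc k)) x
      + (\<Sum>y\<in>D (Suc (Suc k)). w x (Suc (Suc k)) y * (z (Suc (Suc k), y) - rho (Suc k) y * z (Suc k, y) - m (Suc (Suc k)) y))" for z
      using 3 less by (simp add: krig_w)
    show ?thesis unfolding eq using IH by measurable
  qed
qed

lemma obs_meas:
  assumes "t \<le> s" shows "obs_data Z D t \<in> measurable M PU"
  unfolding obs_data_def
proof (rule measurable_PiM_single')
  fix j :: "nat \<times> 'q"
  obtain u y where j: "j = (u, y)" by (cases j)
  show "(\<lambda>\<omega>. case j of (u, y) \<Rightarrow> if u \<in> {1..t} \<and> y \<in> D u then Z u \<omega> y else 0) \<in> borel_measurable M"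
  proof (cases "u \<in> {1..t} \<and> y \<in> D u")
    case True
    then have "(\<lambda>\<omega>. Z u \<omega> y) \<in> borel_measurable M" using assms by (intro Zm) auto
    then show ?thesis using True j by simp
  next
    case False
    then have "(\<lambda>\<omega>. case j of (u, y) \<Rightarrow> if u \<in> {1..t} \<and> y \<in> D u then Z u \<omega> y else 0) = (\<lambda>_. 0)"
      using j by auto
    then show ?thesis by simp
  qed
qed simp

lemma law_val:
  "distr M borel (\<lambda>\<omega>. a0 + val x a \<omega>) = gauss (a0 + Mn x a) (Bil x a a)"
  unfolding val_def Mn_def Bil_def
proof (rule base_law[OF PS _ finFF])
  show "finite {1..s}" by simp
  have "(\<lambda>t. if t = 1 then Z 1 else delta t) = P" by (simp add: P_def fun_eq_iff)
  then show "prob_space.indep_vars M (\<lambda>_. Pi\<^sub>M UNIV (\<lambda>_. borel)) P {1..s}" using ind by simp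
  fix u assume u: "u \<in> {1..s}"
  have "KK u = (\<lambda>x y. sigma2 u * r u x y)" by (simp add: KK_def fun_eq_iff)
  then show "gaussian_process M (P u) (m u) (KK u)" using gpP[OF u] by simp
  fix c :: "'q \<Rightarrow> real"
  have "(\<Sum>y\<in>FF x. \<Sum>y'\<in>FF x. c y * c y' * KK u y y') = sigma2 u * (\<Sum>y\<in>FF x. \<Sum>y'\<in>FF x. c y * c y' * r u y y')"
    by (simp add: KK_def sum_distrib_left mult_ac)
  also have "\<dots> \<ge> 0"
  proof (rule mult_nonneg_nonneg)
    show "0 \<le> sigma2 u" using sig u by (simp add: less_imp_le)
    show "0 \<le> (\<Sum>y\<in>FF x. \<Sum>y'\<in>FF x. c y * c y' * r u y y')"
      using ker u finFF unfolding correlation_kernel_def by blast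
  qed
  finally show "0 \<le> (\<Sum>y\<in>FF x. \<Sum>y'\<in>FF x. c y * c y' * KK u y y')" .
qed

lemma main_cond:
  assumes t: "t \<in> {1..s}"
  shows "has_cond_distr M (\<lambda>\<omega>. Z t \<omega> x) PU (obs_data Z D t)
           (\<lambda>z. gauss (cok_mean m rho r D t x z) (cok_var sigma2 rho r D t x))"
proof -
  interpret prob_space M by (rule PS)
  define J where "J = Sigma {1..t} D"
  define L where "L z = cok_mean m rho r D t x z" for z
  define Y where "Y = obs_data Z D t"
  define e where "e \<omega> = Z t \<omega> x - L (Y \<omega>)" for \<omega>
  define v where "v = cok_var sigma2 rho r D t x"
  define zs where "zs c = (\<lambda>u y. \<Sum>j\<in>J. c j * zc (fst j) (snd j) u y)" for c
  define mY where "mY c = (\<Sum>j\<in>J. c j * Mn x (zc (fst j) (snd j)))" for c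
  define qY where "qY c = Bil x (zs c) (zs c)" for c
  have t1: "1 \<le> t" "t \<le> s" using t by auto
  have finJ: "finite J" unfolding J_def using finD t1 by (intro finite_SigmaI) auto
  have j0: "(0, x) \<notin> J" unfolding J_def by auto
  have Ym[measurable]: "Y \<in> measurable M PU" unfolding Y_def by (rule obs_meas[OF t1(2)])
  have Y0: "Y \<omega> j = 0" if "j \<notin> J" for \<omega> j
    using that unfolding Y_def J_def obs_data_def by (auto split: prod.splits)
  have Lm[measurable]: "L \<in> borel_measurable PU" unfolding L_def by (rule cm_meas[OF t1(2)])
  have em: "e \<in> borel_measurable M"
    unfolding e_def using Zm[OF t1] by measurable
  have v0: "0 \<le> v" unfolding v_def using Bil_ec_ec[OF t1, of x] Bil_psd[of x "ec x t"] by simp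
  have H: "distr M borel (\<lambda>\<omega>. c0 * e \<omega> + (\<Sum>j\<in>J. c j * Y \<omega> j)) = gauss (mY c) (c0\<^sup>2 * v + qY c)" for c0 c
  proof -
    let ?comb = "\<lambda>u y. c0 * ec x t u y + zs c u y"
    have rep: "c0 * e \<omega> + (\<Sum>j\<in>J. c j * Y \<omega> j) = - c0 * Mn x (ec x t) + val x ?comb \<omega>" if \<omega>: "\<omega> \<in> space M" for \<omega>
    proof -
      have E: "e \<omega> = val x (ec x t) \<omega> - Mn x (ec x t)"
        unfolding e_def L_def Y_def using resid_rep[OF t1(1) order_refl t1(2) \<omega>] val_ec[OF t1(2)] by simp
      have Yrep: "Y \<omega> j = val x (zc (fst j) (snd j)) \<omega>" if j: "j \<in> J" for j
      proof -
        obtain u y where uy: "j = (u, y)" "u \<in> {1..t}" "y \<in> D u" using j unfolding J_def by auto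
        have "y \<in> FF x" using DFF[of u x] uy t1 by auto
        then show ?thesis unfolding Y_def obs_data_def using uy t1 Z_rep[of u \<omega> y] \<omega> val_zc[of u y x \<omega>] by auto
      qed
      have S: "(\<Sum>j\<in>J. c j * Y \<omega> j) = (\<Sum>j\<in>J. c j * val x (zc (fst j) (snd j)) \<omega>)"
        by (rule sum.cong) (auto simp: Yrep)
      show ?thesis unfolding zs_def val_lin val_sum E S by (simp add: algebra_simps)
    qed
    have "distr M borel (\<lambda>\<omega>. c0 * e \<omega> + (\<Sum>j\<in>J. c j * Y \<omega> j)) = distr M borel (\<lambda>\<omega>. - c0 * Mn x (ec x t) + val x ?comb \<omega>)"
      by (rule distr_cong) (simp_all add: rep)
    also have "\<dots> = gauss (- c0 * Mn x (ec x t) + Mn x ?comb) (Bil x ?comb ?comb)" by (rule law_val)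
    also have "- c0 * Mn x (ec x t) + Mn x ?comb = mY c"
      unfolding zs_def mY_def by (simp add: Mn_lin Mn_sum)
    also have "Bil x ?comb ?comb = c0\<^sup>2 * v + qY c"
    proof -
      have "Bil x (ec x t) (zs c) = 0"
        unfolding zs_def Bil_sum_right
        by (intro sum.neutral ballI) (auto simp: J_def intro!: Bil_ec_zc t1)
      then show ?thesis unfolding qY_def v_def Bil_expand using Bil_ec_ec[OF t1] by simp
    qed
    finally show ?thesis .
  qed
  have q: "0 \<le> qY c" for c unfolding qY_def by (rule Bil_psd)
  have "has_cond_distr M (\<lambda>\<omega>. Z t \<omega> x) PU Y (\<lambda>z. gauss (L z) v)"
    by (rule cond_gauss[OF PS finJ j0 Ym _ em Lm _ v0 H q]) (auto simp: Y0 e_def)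
  then show ?thesis unfolding Y_def L_def v_def .
qed

end

theorem mainTheorem1:
  fixes M :: "'a measure"
    and s :: nat
    and p q :: "nat \<Rightarrow> nat"
    and f :: "nat \<Rightarrow> 'q \<Rightarrow> nat \<Rightarrow> real" and beta :: "nat \<Rightarrow> nat \<Rightarrow> real"
    and g :: "nat \<Rightarrow> 'q \<Rightarrow> nat \<Rightarrow> real" and beta_rho :: "nat \<Rightarrow> nat \<Rightarrow> real"
    and sigma2 :: "nat \<Rightarrow> real"
    and r :: "nat \<Rightarrow> 'q \<Rightarrow> 'q \<Rightarrow> real"
    and D :: "nat \<Rightarrow> 'q set"
    and Z delta :: "nat \<Rightarrow> 'a \<Rightarrow> 'q \<Rightarrow> real"
  defines "m \<equiv> (\<lambda>t x. \<Sum>i<p t. f t x i * beta t i)"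
    and "rho \<equiv> (\<lambda>t x. \<Sum>i<q t. g t x i * beta_rho t i)"
  assumes "prob_space M"
    and "s \<ge> 2"
    and "\<forall>t\<in>{1..s}. sigma2 t > 0"
    and "\<forall>t\<in>{1..s}. correlation_kernel (r t)"
    and "\<forall>t\<in>{1..s}. finite (D t)"
    and "\<forall>t\<in>{1..<s}. D (Suc t) \<subseteq> D t"
    and "\<forall>t\<in>{1..s}. invertible_on (D t) (r t)"
    and "gaussian_process M (Z 1) (m 1) (\<lambda>x y. sigma2 1 * r 1 x y)"
    and "\<forall>t\<in>{2..s}. gaussian_process M (delta t) (m t) (\<lambda>x y. sigma2 t * r t x y)"
    and "prob_space.indep_vars M (\<lambda>_. Pi\<^sub>M UNIV (\<lambda>_. borel))
           (\<lambda>t. if t = 1 then Z 1 else delta t) {1..s}"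
    and "\<forall>t\<in>{2..s}. \<forall>\<omega>\<in>space M. \<forall>x.
           Z t \<omega> x = rho (t - 1) x * Z (t - 1) \<omega> x + delta t \<omega> x"
  shows "\<forall>t\<in>{1..s}. \<forall>x.
           has_cond_distr M (\<lambda>\<omega>. Z t \<omega> x) (Pi\<^sub>M UNIV (\<lambda>_. borel)) (obs_data Z D t)
             (\<lambda>z. gauss (cok_mean m rho r D t x z) (cok_var sigma2 rho r D t x))"
  proof -
  interpret cok M s m rho sigma2 r D Z delta
    using assms unfolding cok_def by blast
  show ?thesis using main_cond by blast
qed

end
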